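(* If a RiFle assignment game is non-degenerate, then the set of its stable outcomes is a compact (complete) lattice under the partial order $\ge_P$. In particular, there are a unique $P$-optimal stable outcome (the maximum under $\ge_P$) and a unique $Q$-optimal stable outcome (the minimum under $\ge_P$).
   Context: A RiFle assignment game consists of two disjoint sets of agents $P=\{p_1,\dots,p_n\}$ and $Q=\{q_1,\dots,q_n\}$, a pair of nonnegative real numbers $(\beta_{ij},\gamma_{ij})$ for every pair $(p_i,q_j)\in P\times Q$ (write $\alpha_{ij}=\beta_{ij}+\gamma_{ij}$), and a designation of every agent as rigid or flexible. Let $\mathcal R$ be the set of pairs with at least one rigid agent and $\mathcal F$ the set of pairs with both agents flexible. An outcome $(\bar u,\bar v;\mu)$ consists of a matching $\mu$ between $P$ and $Q$ (write $p_i\stackrel{\mu}{\longleftrightarrow} q_j$) and payoff vectors $\bar u,\bar v\in\mathbb R^n$. It is feasible if: (1) $u_i\ge0$, $v_j\ge0$; (2) if a rigid $p_i$ is matched to $q_j$ then $u_i=\beta_{ij}$ and, if $q_j$ is flexible, $v_j\ge\gamma_{ij}$; symmetrically for a rigid $q_j$ matched to $p_i$: $v_j=\gamma_{ij}$ and, if $p_i$ is flexible, $u_i\ge\beta_{ij}$; (3) $\sum_iu_i+\sum_jv_j=\sum_{p_i\stackrel{\mu}{\longleftrightarrow}q_j}\alpha_{ij}$. It is stable if feasible and $u_i+v_j\ge\alpha_{ij}$ for $(p_i,q_j)\in\mathcal F$ and ($u_i\ge\beta_{ij}$ or $v_j\ge\gamma_{ij}$) for $(p_i,q_j)\in\mathcal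 R$. Reservation prices are modeled by rigid dummy agents; for the following definition an agent left unmatched by a matching is regarded as matched to a rigid dummy agent (whose prescribed share for him is his reservation price). Given a coalition $C\subseteq P\cup Q$ and a matching $\mu$, the total payoff to $C$ under $\mu$ is forced if every pair matched under $\mu$ with one agent in $C$ and the other outside $C$ contains a rigid agent; the forced payoff is then $\sum_{p_i\in C,\ p_i\stackrel{\mu}{\longleftrightarrow}q_j}\beta_{ij}+\sum_{q_j\in C,\ p_i\stackrel{\mu}{\longleftrightarrow}q_j}\gamma_{ij}$. The game is non-degenerate if for any two matchings $\mu,\mu'$: whenever $C$ is a minimal coalition such that the payoff to $C$ is forced under both $\mu$ and $\mu'$, and the two forced payoffs are equal, then $\mu$ and $\mu'$ coincide on $C$. For outcomes, $(\bar u,\bar v;\mu)\ge_P(\bar u',\bar v';\mu')$ means $\bar u\ge\bar u'$ and $\bar v\le\bar v'$ componentwise. *)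

theory Defs
  imports Complex_Main
begin

(* Agents: P = {p_i | i :: 'n}, Q = {q_j | j :: 'n}, with 'n a finite index type (n = CARD('n)).
   A game is given by beta, gamma :: 'n => 'n => real and rigidity predicates
   rP (for P-agents) and rQ (for Q-agents).
   A matching is a bijection sigma :: 'n => 'n, meaning p_i <-> q_(sigma i). *)

definition alpha :: "('n \<Rightarrow> 'n \<Rightarrow> real) \<Rightarrow> ('n \<Rightarrow> 'n \<Rightarrow> real) \<Rightarrow> 'n \<Rightarrow> 'n \<Rightarrow> real" where
  "alpha \<beta> \<gamma> i j = \<beta> i j + \<gamma> i j"

type_synonym 'n outcome = "('n \<Rightarrow> real) \<times> ('n \<Rightarrow> real) \<times> ('n \<Rightarrow> 'n)"

definition feasible ::
  "('n::finite \<Rightarrow> 'n \<Rightarrow> real) \<Rightarrow> ('n \<Rightarrow> 'n \<Rightarrow> real) \<Rightarrow> ('n \<Rightarrow> bool) \<Rightarrow> ('n \<Rightarrow> bool)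
     \<Rightarrow> 'n outcome \<Rightarrow> bool" where
  "feasible \<beta> \<gamma> rP rQ x \<longleftrightarrow>
     (case x of (u, v, \<sigma>) \<Rightarrow>
        bij \<sigma> \<and>
        (\<forall>i. 0 \<le> u i) \<and> (\<forall>j. 0 \<le> v j) \<and>
        (\<forall>i. rP i \<longrightarrow> u i = \<beta> i (\<sigma> i) \<and> (\<not> rQ (\<sigma> i) \<longrightarrow> \<gamma> i (\<sigma> i) \<le> v (\<sigma> i))) \<and>
        (\<forall>i. rQ (\<sigma> i) \<longrightarrow> v (\<sigma> i) = \<gamma> i (\<sigma> i) \<and> (\<not> rP i \<longrightarrow> \<beta> i (\<sigma> i) \<le> u i)) \<and>
        (\<Sum>i\<in>UNIV. u i) + (\<Sum>j\<in>UNIV. v j) = (\<Sum>i\<in>UNIV. alpha \<beta> \<gamma> i (\<sigma> i)))"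

definition rifle_stable ::
  "('n::finite \<Rightarrow> 'n \<Rightarrow> real) \<Rightarrow> ('n \<Rightarrow> 'n \<Rightarrow> real) \<Rightarrow> ('n \<Rightarrow> bool) \<Rightarrow> ('n \<Rightarrow> bool)
     \<Rightarrow> 'n outcome \<Rightarrow> bool" where
  "rifle_stable \<beta> \<gamma> rP rQ x \<longleftrightarrow> feasible \<beta> \<gamma> rP rQ x \<and>
     (case x of (u, v, \<sigma>) \<Rightarrow>
        (\<forall>i j. \<not> rP i \<and> \<not> rQ j \<longrightarrow> alpha \<beta> \<gamma> i j \<le> u i + v j) \<and>
        (\<forall>i j. rP i \<or> rQ j \<longrightarrow> \<beta> i j \<le> u i \<or> \<gamma> i j \<le> v j))"

(* Coalition C = {p_i | i \<in> CP} \<union> {q_j | j \<in> CQ}. *)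
definition forced :: "('n \<Rightarrow> bool) \<Rightarrow> ('n \<Rightarrow> bool) \<Rightarrow> ('n \<Rightarrow> 'n) \<Rightarrow> 'n set \<Rightarrow> 'n set \<Rightarrow> bool" where
  "forced rP rQ \<sigma> CP CQ \<longleftrightarrow> (\<forall>i. (i \<in> CP) \<noteq> (\<sigma> i \<in> CQ) \<longrightarrow> rP i \<or> rQ (\<sigma> i))"

definition forced_payoff ::
  "('n::finite \<Rightarrow> 'n \<Rightarrow> real) \<Rightarrow> ('n \<Rightarrow> 'n \<Rightarrow> real) \<Rightarrow> ('n \<Rightarrow> 'n) \<Rightarrow> 'n set \<Rightarrow> 'n set \<Rightarrow> real" where
  "forced_payoff \<beta> \<gamma> \<sigma> CP CQ =
     (\<Sum>i\<in>CP. \<beta> i (\<sigma> i)) + (\<Sum>i\<in>{i. \<sigma> i \<in> CQ}. \<gamma> i (\<sigma> i))"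

definition minimal_forced_both ::
  "('n \<Rightarrow> bool) \<Rightarrow> ('n \<Rightarrow> bool) \<Rightarrow> ('n \<Rightarrow> 'n) \<Rightarrow> ('n \<Rightarrow> 'n) \<Rightarrow> 'n set \<Rightarrow> 'n set \<Rightarrow> bool" where
  "minimal_forced_both rP rQ \<sigma> \<sigma>' CP CQ \<longleftrightarrow>
     (CP \<noteq> {} \<or> CQ \<noteq> {}) \<and> forced rP rQ \<sigma> CP CQ \<and> forced rP rQ \<sigma>' CP CQ \<and>
     (\<forall>CP' CQ'. CP' \<subseteq> CP \<and> CQ' \<subseteq> CQ \<and> (CP' \<noteq> {} \<or> CQ' \<noteq> {}) \<and>
        forced rP rQ \<sigma> CP' CQ' \<and> forced rP rQ \<sigma>' CP' CQ' \<longrightarrow> CP' = CP \<and> CQ' = CQ)"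

definition non_degenerate ::
  "('n::finite \<Rightarrow> 'n \<Rightarrow> real) \<Rightarrow> ('n \<Rightarrow> 'n \<Rightarrow> real) \<Rightarrow> ('n \<Rightarrow> bool) \<Rightarrow> ('n \<Rightarrow> bool) \<Rightarrow> bool" where
  "non_degenerate \<beta> \<gamma> rP rQ \<longleftrightarrow>
     (\<forall>\<sigma> \<sigma>' CP CQ. bij \<sigma> \<and> bij \<sigma>' \<and> minimal_forced_both rP rQ \<sigma> \<sigma>' CP CQ \<and>
        forced_payoff \<beta> \<gamma> \<sigma> CP CQ = forced_payoff \<beta> \<gamma> \<sigma>' CP CQ \<longrightarrow>
        (\<forall>i\<in>CP. \<sigma> i = \<sigma>' i) \<and> (\<forall>j\<in>CQ. inv \<sigma> j = inv \<sigma>' j))"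

definition geP :: "'n outcome \<Rightarrow> 'n outcome \<Rightarrow> bool" where
  "geP x y \<longleftrightarrow> (\<forall>i. fst y i \<le> fst x i) \<and> (\<forall>j. fst (snd x) j \<le> fst (snd y) j)"

definition is_lubP :: "'n outcome set \<Rightarrow> 'n outcome set \<Rightarrow> 'n outcome \<Rightarrow> bool" where
  "is_lubP S A s \<longleftrightarrow> s \<in> S \<and> (\<forall>a\<in>A. geP s a) \<and> (\<forall>t\<in>S. (\<forall>a\<in>A. geP t a) \<longrightarrow> geP t s)"

definition is_glbP :: "'n outcome set \<Rightarrow> 'n outcome set \<Rightarrow> 'n outcome \<Rightarrow> bool" where
  "is_glbP S A s \<longleftrightarrow> s \<in> S \<and> (\<forall>a\<in>A. geP a s) \<and> (\<forall>t\<in>S. (\<forall>a\<in>A. geP a t) \<longrightarrow> geP s t)"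

end

theory Submission
  imports Defs "HOL-Analysis.Analysis" "HOL-Library.Countable"
begin


locale rifle =
  fixes \<beta> \<gamma> :: "'n::finite \<Rightarrow> 'n \<Rightarrow> real" and rP rQ :: "'n \<Rightarrow> bool"
  assumes nonneg: "\<And>i j. 0 \<le> \<beta> i j" "\<And>i j. 0 \<le> \<gamma> i j"
begin

abbreviation "stab x \<equiv> rifle_stable \<beta> \<gamma> rP rQ x"
abbreviation "\<alpha> \<equiv> alpha \<beta> \<gamma>"

lemma sum_reindex_bij:
  fixes f :: "'n \<Rightarrow> real"
  assumes "bij \<sigma>"
  shows "(\<Sum>j\<in>UNIV. f j) = (\<Sum>i\<in>UNIV. f (\<sigma> i))"
proof -
  have "inj \<sigma>" "range \<sigma> = UNIV" using assms by (auto simp: bij_def)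
  then show ?thesis using sum.reindex[of \<sigma> UNIV f] by simp
qed

lemma stab_facts:
  assumes "stab (u, v, \<sigma>)"
  shows "bij \<sigma>" "\<And>i. 0 \<le> u i" "\<And>j. 0 \<le> v j"
    "\<And>i j. \<not> rP i \<Longrightarrow> \<not> rQ j \<Longrightarrow> \<alpha> i j \<le> u i + v j"
    "\<And>i j. rP i \<or> rQ j \<Longrightarrow> \<beta> i j \<le> u i \<or> \<gamma> i j \<le> v j"
    "\<And>i. u i + v (\<sigma> i) = \<alpha> i (\<sigma> i)"
    "\<And>i. rP i \<or> rQ (\<sigma> i) \<Longrightarrow> u i = \<beta> i (\<sigma> i) \<and> v (\<sigma> i) = \<gamma> i (\<sigma> i)"
proof -
  note F = assms[unfolded rifle_stable_def feasible_def, simplified]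
  show b: "bij \<sigma>" and "\<And>i. 0 \<le> u i" "\<And>j. 0 \<le> v j"
    "\<And>i j. \<not> rP i \<Longrightarrow> \<not> rQ j \<Longrightarrow> \<alpha> i j \<le> u i + v j"
    "\<And>i j. rP i \<or> rQ j \<Longrightarrow> \<beta> i j \<le> u i \<or> \<gamma> i j \<le> v j" using F by auto
  have ge: "\<alpha> i (\<sigma> i) \<le> u i + v (\<sigma> i)" for i
    using F by (cases "rP i"; cases "rQ (\<sigma> i)") (auto simp: alpha_def)
  have "(\<Sum>i\<in>UNIV. u i) + (\<Sum>i\<in>UNIV. v (\<sigma> i)) = (\<Sum>i\<in>UNIV. \<alpha> i (\<sigma> i))"
    using F sum_reindex_bij[OF b, of v] by simp
  then have "(\<Sum>i\<in>UNIV. u i + v (\<sigma> i) - \<alpha> i (\<sigma> i)) = 0"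
    by (simp add: sum.distrib sum_subtractf)
  moreover have "\<forall>i\<in>UNIV. 0 \<le> u i + v (\<sigma> i) - \<alpha> i (\<sigma> i)" using ge by auto
  ultimately have "\<forall>i\<in>UNIV. u i + v (\<sigma> i) - \<alpha> i (\<sigma> i) = 0"
    using sum_nonneg_eq_0_iff[of UNIV "\<lambda>i. u i + v (\<sigma> i) - \<alpha> i (\<sigma> i)"] by simp
  then show eq: "\<And>i. u i + v (\<sigma> i) = \<alpha> i (\<sigma> i)" by auto
  show "\<And>i. rP i \<or> rQ (\<sigma> i) \<Longrightarrow> u i = \<beta> i (\<sigma> i) \<and> v (\<sigma> i) = \<gamma> i (\<sigma> i)"
  proof -
    fix i assume "rP i \<or> rQ (\<sigma> i)"
    then show "u i = \<beta> i (\<sigma> i) \<and> v (\<sigma> i) = \<gamma> i (\<sigma> i)"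
      using F eq[of i] by (auto simp: alpha_def)
  qed
qed

lemma sum_if_UNIV: fixes C :: "'n set" shows "(\<Sum>i\<in>C. f i) = (\<Sum>i\<in>UNIV. if i \<in> C then f i else (0::real))"
  using sum.inter_restrict[of UNIV f C] by simp

lemma forced_payoff_eq:
  assumes st: "stab (u, v, \<sigma>)" and fo: "forced rP rQ \<sigma> CP CQ"
  shows "forced_payoff \<beta> \<gamma> \<sigma> CP CQ = (\<Sum>i\<in>CP. u i) + (\<Sum>j\<in>CQ. v j)"
proof -
  note S = stab_facts[OF st]
  have "inj \<sigma>" "surj \<sigma>" using S(1) by (auto simp: bij_def)
  then have bb: "bij_betw \<sigma> {i. \<sigma> i \<in> CQ} CQ"
    unfolding bij_betw_def by (auto intro: inj_on_subset simp: image_iff surj_def)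
  have "(\<Sum>j\<in>CQ. v j) = (\<Sum>i\<in>{i. \<sigma> i \<in> CQ}. v (\<sigma> i))"
    using sum.reindex_bij_betw[OF bb, of v] by simp
  also have "\<dots> = (\<Sum>i\<in>UNIV. if \<sigma> i \<in> CQ then v (\<sigma> i) else 0)"
    by (simp add: sum.If_cases)
  finally have 1: "(\<Sum>j\<in>CQ. v j) = (\<Sum>i\<in>UNIV. if \<sigma> i \<in> CQ then v (\<sigma> i) else 0)" .
  have 2: "(\<Sum>i\<in>{i. \<sigma> i \<in> CQ}. \<gamma> i (\<sigma> i)) = (\<Sum>i\<in>UNIV. if \<sigma> i \<in> CQ then \<gamma> i (\<sigma> i) else 0)"
    by (simp add: sum.If_cases)
  have pt: "(if i \<in> CP then \<beta> i (\<sigma> i) else 0) + (if \<sigma> i \<in> CQ then \<gamma> i (\<sigma> i) else 0)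
      = (if i \<in> CP then u i else 0) + (if \<sigma> i \<in> CQ then v (\<sigma> i) else 0)" for i
  proof -
    have r: "(i \<in> CP) \<noteq> (\<sigma> i \<in> CQ) \<Longrightarrow> rP i \<or> rQ (\<sigma> i)" using fo by (auto simp: forced_def)
    show ?thesis using S(6)[of i] S(7)[of i] r by (auto simp: alpha_def)
  qed
  show ?thesis
    unfolding forced_payoff_def 1 2 sum_if_UNIV[where C=CP] sum.distrib[symmetric] using pt by simp
qed

lemma forced_diff:
  assumes "forced rP rQ \<sigma> CP CQ" "forced rP rQ \<sigma> a b"
  shows "forced rP rQ \<sigma> (CP - a) (CQ - b)"
  using assms unfolding forced_def by blast

end

locale rifle_nd = rifle +
  assumes nd: "non_degenerate \<beta> \<gamma> rP rQ"
begin

lemma zero_coal: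
  assumes st: "stab (u, v, \<sigma>)" and st': "stab (u', v', \<sigma>')"
  shows "forced rP rQ \<sigma> CP CQ \<Longrightarrow> forced rP rQ \<sigma>' CP CQ \<Longrightarrow> \<forall>i\<in>CP. u i = u' i \<Longrightarrow> \<forall>j\<in>CQ. v j = v' j
    \<Longrightarrow> (\<forall>i\<in>CP. \<sigma> i = \<sigma>' i) \<and> (\<forall>j\<in>CQ. inv \<sigma> j = inv \<sigma>' j)"
proof (induction "card CP + card CQ" arbitrary: CP CQ rule: less_induct)
  case (less CP CQ)
  show ?case
  proof (cases "CP = {} \<and> CQ = {}")
    case True then show ?thesis by simp
  next
    case False
    define M where "M = {(a,b). a \<subseteq> CP \<and> b \<subseteq> CQ \<and> (a \<noteq> {} \<or> b \<noteq> {}) \<and> forced rP rQ \<sigma> a b \<and> forced rP rQ \<sigma>' a b}"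
    have "(CP, CQ) \<in> M" using False less.prems unfolding M_def by auto
    then obtain ab where ab: "ab \<in> M" and abmin: "\<And>y. y \<in> M \<Longrightarrow> card (fst ab) + card (snd ab) \<le> card (fst y) + card (snd y)"
      using ex_has_least_nat[of "\<lambda>ab. ab \<in> M" "(CP, CQ)" "\<lambda>ab. card (fst ab) + card (snd ab)"] by blast
    obtain a b where abd: "ab = (a, b)" by (cases ab)
    have a: "a \<subseteq> CP" "b \<subseteq> CQ" "a \<noteq> {} \<or> b \<noteq> {}" "forced rP rQ \<sigma> a b" "forced rP rQ \<sigma>' a b"
      using ab abd unfolding M_def by auto
    have mn: "\<forall>CP' CQ'. CP' \<subseteq> a \<and> CQ' \<subseteq> b \<and> (CP' \<noteq> {} \<or> CQ' \<noteq> {}) \<and>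
        forced rP rQ \<sigma> CP' CQ' \<and> forced rP rQ \<sigma>' CP' CQ' \<longrightarrow> CP' = a \<and> CQ' = b"
    proof (intro allI impI)
      fix CP' CQ' assume h: "CP' \<subseteq> a \<and> CQ' \<subseteq> b \<and> (CP' \<noteq> {} \<or> CQ' \<noteq> {}) \<and> forced rP rQ \<sigma> CP' CQ' \<and> forced rP rQ \<sigma>' CP' CQ'"
      then have "(CP', CQ') \<in> M" using a unfolding M_def by auto
      from abmin[OF this] abd have le: "card a + card b \<le> card CP' + card CQ'" by simp
      have "card CP' \<le> card a" "card CQ' \<le> card b" using h by (auto intro: card_mono)
      then have "card CP' = card a" "card CQ' = card b" using le by auto
      then show "CP' = a \<and> CQ' = b" using h by (metis card_subset_eq finite)
    qed
    have minf: "minimal_forced_both rP rQ \<sigma> \<sigma>' a b"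
      unfolding minimal_forced_both_def using a mn by blast
    have "forced_payoff \<beta> \<gamma> \<sigma> a b = forced_payoff \<beta> \<gamma> \<sigma>' a b"
      using forced_payoff_eq[OF st a(4)] forced_payoff_eq[OF st' a(5)] less.prems(3,4) a(1,2)
      by (metis (no_types, lifting) subsetD sum.cong)
    then have co: "(\<forall>i\<in>a. \<sigma> i = \<sigma>' i) \<and> (\<forall>j\<in>b. inv \<sigma> j = inv \<sigma>' j)"
      using nd minf stab_facts(1)[OF st] stab_facts(1)[OF st'] unfolding non_degenerate_def by blast
    have "card (CP - a) + card (CQ - b) < card CP + card CQ"
    proof -
      have "card (CP - a) = card CP - card a" "card (CQ - b) = card CQ - card b"
        using a by (auto intro: card_Diff_subset)
      moreover have "card a \<le> card CP" "card b \<le> card CQ" using a by (auto intro: card_mono)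
      moreover have "card a > 0 \<or> card b > 0" using a(3) by auto
      ultimately show ?thesis by linarith
    qed
    from less.hyps[OF this forced_diff[OF less.prems(1) a(4)] forced_diff[OF less.prems(2) a(5)]] less.prems(3,4)
    have "(\<forall>i\<in>CP - a. \<sigma> i = \<sigma>' i) \<and> (\<forall>j\<in>CQ - b. inv \<sigma> j = inv \<sigma>' j)" by auto
    with co show ?thesis by blast
  qed
qed

lemma antisym_stab:
  assumes st: "stab (u, v, \<sigma>)" and st': "stab (u', v', \<sigma>')" and "u = u'" "v = v'"
  shows "\<sigma> = \<sigma>'"
proof -
  have "forced rP rQ s UNIV UNIV" for s unfolding forced_def by auto
  then have "\<forall>i\<in>UNIV. \<sigma> i = \<sigma>' i" using zero_coal[OF st st', of UNIV UNIV] assms by auto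
  then show ?thesis by auto
qed

end


definition succ :: "('n \<Rightarrow> 'n) \<Rightarrow> ('n \<Rightarrow> 'n) \<Rightarrow> 'n + 'n \<Rightarrow> 'n + 'n" where
  "succ \<sigma> \<sigma>' a = (case a of Inl i \<Rightarrow> Inr (\<sigma> i) | Inr j \<Rightarrow> Inl (inv \<sigma>' j))"

definition dlt :: "('n \<Rightarrow> real) \<Rightarrow> ('n \<Rightarrow> real) \<Rightarrow> ('n \<Rightarrow> real) \<Rightarrow> ('n \<Rightarrow> real) \<Rightarrow> 'n + 'n \<Rightarrow> real" where
  "dlt u v u' v' a = (case a of Inl i \<Rightarrow> u i - u' i | Inr j \<Rightarrow> v j - v' j)"

definition Aty where "Aty u v u' v' a = (case a of Inl i \<Rightarrow> u i > u' i | Inr j \<Rightarrow> v j < v' j)"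
definition Bty where "Bty u v u' v' a = (case a of Inl i \<Rightarrow> u i < u' i | Inr j \<Rightarrow> v j > v' j)"

definition erig where
  "erig rP rQ \<sigma> \<sigma>' a = (case a of Inl i \<Rightarrow> rP i \<or> rQ (\<sigma> i) | Inr j \<Rightarrow> rP (inv \<sigma>' j) \<or> rQ j)"

lemma funpow_cycle:
  fixes f :: "'a::finite \<Rightarrow> 'a"
  assumes "inj f"
  shows "\<exists>m>0. (f ^^ m) x = x"
proof -
  have "\<not> inj (\<lambda>k::nat. (f ^^ k) x)"
  proof
    assume "inj (\<lambda>k::nat. (f ^^ k) x)"
    then have "infinite (range (\<lambda>k::nat. (f ^^ k) x))"
      using finite_imageD infinite_UNIV_nat by blast
    then show False by simp
  qed
  then obtain i j :: nat where ij: "i \<noteq> j" "(f ^^ i) x = (f ^^ j) x" unfolding inj_def by blast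
  have key: "(f ^^ (b - a)) x = x" if "a < b" "(f ^^ a) x = (f ^^ b) x" for a b
  proof -
    have "(f ^^ a) ((f ^^ (b - a)) x) = (f ^^ a) x"
      using that by (metis add_diff_inverse_nat funpow_add less_imp_le_nat not_le comp_apply)
    then show ?thesis using inj_fn[OF assms, of a] by (auto dest: injD)
  qed
  show ?thesis
  proof (cases "i < j")
    case True then show ?thesis using key[OF True ij(2)] by (intro exI[of _ "j - i"]) auto
  next
    case False then have "j < i" using ij by auto
    then show ?thesis using key[OF \<open>j < i\<close> ij(2)[symmetric]] by (intro exI[of _ "i - j"]) auto
  qed
qed

lemma inj_bij_finite: "inj (f :: 'a::finite \<Rightarrow> 'a) \<Longrightarrow> bij f"
  using finite_UNIV_inj_surj[of f] by (simp add: bij_def)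

context rifle_nd
begin

context
  fixes u v \<sigma> u' v' \<sigma>'
  assumes st: "stab (u, v, \<sigma>)" and st': "stab (u', v', \<sigma>')"
begin

abbreviation "S \<equiv> succ \<sigma> \<sigma>'"
abbreviation "A \<equiv> Aty u v u' v'"
abbreviation "B \<equiv> Bty u v u' v'"
abbreviation "D \<equiv> dlt u v u' v'"
abbreviation "E \<equiv> erig rP rQ \<sigma> \<sigma>'"

lemma bijs: "bij \<sigma>" "bij \<sigma>'" using stab_facts(1)[OF st] stab_facts(1)[OF st'] .

lemma sinv: "\<sigma>' (inv \<sigma>' j) = j" "inv \<sigma> (\<sigma> i) = i" "\<sigma> (inv \<sigma> j) = j" "inv \<sigma>' (\<sigma>' i) = i"
  using bijs by (auto simp: bij_def surj_f_inv_f inv_f_f)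

lemma succ_inj: "inj S"
proof
  fix x y assume "S x = S y"
  moreover have "inj (inv \<sigma>')" using bijs(2) by (simp add: bij_imp_bij_inv bij_is_inj)
  ultimately show "x = y" using bijs
    by (cases x; cases y) (auto simp: succ_def bij_def inj_eq)
qed

lemma F1: "A a \<Longrightarrow> \<not> B (S a)"
  and F2: "A a \<Longrightarrow> D (S a) = 0 \<Longrightarrow> E a"
proof -
  note s = stab_facts[OF st] and s' = stab_facts[OF st']
  have "(\<not> B (S a)) \<and> (D (S a) = 0 \<longrightarrow> E a)" if "A a"
  proof (cases a)
    case (Inl i)
    let ?j = "\<sigma> i"
    show ?thesis
    proof (cases "rP i \<or> rQ ?j")
      case True
      then show ?thesis using that Inl s(7)[of i] s'(5)[of i ?j]
        by (auto simp: Aty_def Bty_def succ_def dlt_def erig_def)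
    next
      case False
      then show ?thesis using that Inl s(6)[of i] s'(4)[of i ?j]
        by (auto simp: Aty_def Bty_def succ_def dlt_def erig_def)
    qed
  next
    case (Inr j)
    let ?k = "inv \<sigma>' j"
    show ?thesis
    proof (cases "rP ?k \<or> rQ j")
      case True
      then show ?thesis using that Inr s'(7)[of ?k] s(5)[of ?k j] sinv(1)[of j]
        by (auto simp: Aty_def Bty_def succ_def dlt_def erig_def)
    next
      case False
      then show ?thesis using that Inr s'(6)[of ?k] s(4)[of ?k j] sinv(1)[of j]
        by (auto simp: Aty_def Bty_def succ_def dlt_def erig_def)
    qed
  qed
  then show "A a \<Longrightarrow> \<not> B (S a)" "A a \<Longrightarrow> D (S a) = 0 \<Longrightarrow> E a" by auto
qed

lemma F3: "D z = 0 \<Longrightarrow> B (S z) \<Longrightarrow> E z"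
proof -
  note s = stab_facts[OF st] and s' = stab_facts[OF st']
  assume z: "D z = 0" "B (S z)"
  show "E z"
  proof (cases z)
    case (Inl i)
    show ?thesis
    proof (rule ccontr)
      assume "\<not> E z"
      then show False using z Inl s(6)[of i] s'(4)[of i "\<sigma> i"]
        by (auto simp: Aty_def Bty_def succ_def dlt_def erig_def)
    qed
  next
    case (Inr j)
    show ?thesis
    proof (rule ccontr)
      assume "\<not> E z"
      then show False using z Inr s'(6)[of "inv \<sigma>' j"] s(4)[of "inv \<sigma>' j" j] sinv(1)[of j]
        by (auto simp: Aty_def Bty_def succ_def dlt_def erig_def)
    qed
  qed
qed

lemma AB_excl: "A a \<Longrightarrow> \<not> B a" by (cases a) (auto simp: Aty_def Bty_def)
lemma zero_iff: "D a = 0 \<longleftrightarrow> \<not> A a \<and> \<not> B a" by (cases a) (auto simp: Aty_def Bty_def dlt_def)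

lemma noB:
  assumes Aa: "A a"
  shows "\<not> B ((S ^^ m) a)"
proof
  assume Bm: "B ((S ^^ m) a)"
  define W where "W r = (S ^^ r) a" for r
  have W0: "W 0 = a" and WS: "\<And>r. W (Suc r) = S (W r)" unfolding W_def by auto
  have pred: "\<And>r y. W (Suc r) = S y \<Longrightarrow> W r = y" using succ_inj WS by (metis injD)
  have "A (W 0) \<and> 0 < m" using Aa W0 Bm AB_excl W_def by (cases m) auto
  define s where "s = (GREATEST r. r < m \<and> A (W r))"
  have sP: "s < m \<and> A (W s)" unfolding s_def
    by (rule GreatestI_nat[of _ 0 m]) (use \<open>A (W 0) \<and> 0 < m\<close> in auto)
  have smax: "\<And>r. r < m \<Longrightarrow> A (W r) \<Longrightarrow> r \<le> s" unfolding s_def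
    by (rule Greatest_le_nat[of _ _ m]) auto
  define t where "t = (LEAST r. s < r \<and> B (W r))"
  have tP: "s < t \<and> B (W t)" unfolding t_def by (rule LeastI[of _ m]) (use sP Bm W_def in auto)
  have tmin: "\<And>r. s < r \<Longrightarrow> B (W r) \<Longrightarrow> t \<le> r" unfolding t_def by (rule Least_le) auto
  have tm: "t \<le> m" using tmin[of m] sP Bm W_def by auto
  have zero: "D (W r) = 0" if "s < r" "r < t" for r
  proof -
    have "\<not> A (W r)" using smax[of r] that tm by auto
    moreover have "\<not> B (W r)" using tmin[of r] that by auto
    ultimately show ?thesis using zero_iff by auto
  qed
  have "\<not> B (W (Suc s))" using F1[of "W s"] sP WS by auto
  then have st2: "Suc s < t" using tP by (metis Suc_lessI)
  define CP where "CP = {i. \<exists>r. s < r \<and> r < t \<and> W r = Inl i}"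
  define CQ where "CQ = {j. \<exists>r. s < r \<and> r < t \<and> W r = Inr j}"
  have Si: "S (Inl i) = Inr (\<sigma> i)" for i by (simp add: succ_def)
  have Sj: "S (Inr (\<sigma>' k)) = Inl k" for k by (simp add: succ_def sinv)
  have Sj2: "S (Inr j) = Inl (inv \<sigma>' j)" for j by (simp add: succ_def)
  have Ei: "E (Inl i) = (rP i \<or> rQ (\<sigma> i))" for i by (simp add: erig_def)
  have Ej: "E (Inr (\<sigma>' k)) = (rP k \<or> rQ (\<sigma>' k))" for k by (simp add: erig_def sinv)
  have fo1: "forced rP rQ \<sigma> CP CQ"
    unfolding forced_def
  proof (intro allI impI)
    fix i assume h: "(i \<in> CP) \<noteq> (\<sigma> i \<in> CQ)"
    show "rP i \<or> rQ (\<sigma> i)"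
    proof (cases "i \<in> CP")
      case True
      then obtain r where r: "s < r" "r < t" "W r = Inl i" unfolding CP_def by auto
      have "W (Suc r) = Inr (\<sigma> i)" using WS r Si by simp
      then have "\<not> Suc r < t" using h True r unfolding CQ_def by auto
      then have "Suc r = t" using r by auto
      then show ?thesis using F3[of "W r"] zero[OF r(1,2)] tP WS r Ei by auto
    next
      case False
      then obtain r where r: "s < r" "r < t" "W r = Inr (\<sigma> i)" using h unfolding CQ_def by auto
      obtain r' where r': "r = Suc r'" using r by (cases r) auto
      have "W r' = Inl i" using pred[of r' "Inl i"] r r' Si by simp
      then have "\<not> s < r'" using False r r' unfolding CP_def by auto
      then have "r' = s" using r r' by auto
      then show ?thesis using F2[of "W s"] sP zero[OF r(1,2)] r r' \<open>W r' = Inl i\<close> WS Ei by auto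
    qed
  qed
  have fo2: "forced rP rQ \<sigma>' CP CQ"
    unfolding forced_def
  proof (intro allI impI)
    fix k assume h: "(k \<in> CP) \<noteq> (\<sigma>' k \<in> CQ)"
    show "rP k \<or> rQ (\<sigma>' k)"
    proof (cases "\<sigma>' k \<in> CQ")
      case True
      then obtain r where r: "s < r" "r < t" "W r = Inr (\<sigma>' k)" unfolding CQ_def by auto
      have "W (Suc r) = Inl k" using WS r Sj by simp
      then have "\<not> Suc r < t" using h True r unfolding CP_def by auto
      then have "Suc r = t" using r by auto
      then show ?thesis using F3[of "W r"] zero[OF r(1,2)] tP WS r Ej by auto
    next
      case False
      then obtain r where r: "s < r" "r < t" "W r = Inl k" using h unfolding CP_def by auto
      obtain r' where r': "r = Suc r'" using r by (cases r) auto
      have "W r' = Inr (\<sigma>' k)" using pred[of r' "Inr (\<sigma>' k)"] r r' Sj by simp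
      then have "\<not> s < r'" using False r r' unfolding CQ_def by auto
      then have "r' = s" using r r' by auto
      then show ?thesis using F2[of "W s"] sP zero[OF r(1,2)] r r' \<open>W r' = Inr (\<sigma>' k)\<close> WS Ej by auto
    qed
  qed
  have z1: "\<forall>i\<in>CP. u i = u' i" unfolding CP_def using zero by (force simp: dlt_def)
  have z2: "\<forall>j\<in>CQ. v j = v' j" unfolding CQ_def using zero by (force simp: dlt_def)
  from zero_coal[OF st st' fo1 fo2 z1 z2]
  have ag: "\<forall>i\<in>CP. \<sigma> i = \<sigma>' i" "\<forall>j\<in>CQ. inv \<sigma> j = inv \<sigma>' j" by auto
  have bad: "W (Suc (Suc s)) \<noteq> W s"
  proof
    assume eq: "W (Suc (Suc s)) = W s"
    show False
    proof (cases "Suc (Suc s) < t")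
      case True
      then have "D (W (Suc (Suc s))) = 0" using zero by auto
      then show False using eq sP zero_iff by auto
    next
      case False
      then have "Suc (Suc s) = t" using st2 by auto
      then show False using eq sP tP AB_excl by auto
    qed
  qed
  show False
  proof (cases "W (Suc s)")
    case (Inl k)
    then have kC: "k \<in> CP" using st2 unfolding CP_def by auto
    have "W s = Inr (\<sigma>' k)" using pred[of s "Inr (\<sigma>' k)"] Inl Sj by simp
    moreover have "W (Suc (Suc s)) = Inr (\<sigma> k)" using WS Inl Si by simp
    ultimately show False using bad ag kC by auto
  next
    case (Inr j)
    then have jC: "j \<in> CQ" using st2 unfolding CQ_def by auto
    have "W s = Inl (inv \<sigma> j)" using pred[of s "Inl (inv \<sigma> j)"] Inr Si sinv(3) by simp
    moreover have "W (Suc (Suc s)) = Inl (inv \<sigma>' j)" using WS Inr Sj2 by simp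
    ultimately show False using bad ag jC by auto
  qed
qed

lemma partition:
  "\<exists>AP AQ. (\<forall>i. i \<in> AP \<longleftrightarrow> \<sigma> i \<in> AQ) \<and> (\<forall>i. i \<in> AP \<longleftrightarrow> \<sigma>' i \<in> AQ) \<and>
     (\<forall>i\<in>AP. u' i \<le> u i) \<and> (\<forall>i. i \<notin> AP \<longrightarrow> u i \<le> u' i) \<and>
     (\<forall>j\<in>AQ. v j \<le> v' j) \<and> (\<forall>j. j \<notin> AQ \<longrightarrow> v' j \<le> v j)"
proof -
  define R where "R = {y. \<exists>a m. A a \<and> (S ^^ m) a = y}"
  have Rs: "y \<in> R \<Longrightarrow> S y \<in> R" for y
    unfolding R_def by clarsimp (metis funpow.simps(2) comp_apply)
  have Rp: "S y \<in> R \<Longrightarrow> y \<in> R" for y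
  proof -
    assume "S y \<in> R"
    then obtain a m where a: "A a" "(S ^^ m) a = S y" unfolding R_def by auto
    obtain p where p: "p > 0" "(S ^^ p) y = y" using funpow_cycle[OF succ_inj] by blast
    have "(S ^^ (p - 1)) (S y) = y" using p
      by (metis Suc_diff_1 funpow_Suc_right comp_apply)
    then have "(S ^^ (p - 1 + m)) a = y" using a by (simp add: funpow_add)
    then show "y \<in> R" using a unfolding R_def by auto
  qed
  have RA: "A y \<Longrightarrow> y \<in> R" for y unfolding R_def by (auto intro!: exI[of _ y] exI[of _ "0::nat"])
  have RB: "y \<in> R \<Longrightarrow> \<not> B y" for y unfolding R_def using noB by auto
  define AP where "AP = {i. Inl i \<in> R}"
  define AQ where "AQ = {j. Inr j \<in> R}"
  have Si: "S (Inl i) = Inr (\<sigma> i)" for i by (simp add: succ_def)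
  have Sj: "S (Inr (\<sigma>' k)) = Inl k" for k by (simp add: succ_def sinv)
  have c1: "i \<in> AP \<longleftrightarrow> \<sigma> i \<in> AQ" for i unfolding AP_def AQ_def using Rs[of "Inl i"] Rp[of "Inl i"] Si by auto
  have c2: "i \<in> AP \<longleftrightarrow> \<sigma>' i \<in> AQ" for i unfolding AP_def AQ_def using Rs[of "Inr (\<sigma>' i)"] Rp[of "Inr (\<sigma>' i)"] Sj by auto
  have c3: "i \<in> AP \<Longrightarrow> u' i \<le> u i" for i using RB[of "Inl i"] unfolding AP_def by (auto simp: Bty_def)
  have c4: "i \<notin> AP \<Longrightarrow> u i \<le> u' i" for i
  proof -
    assume "i \<notin> AP" then have "\<not> A (Inl i)" using RA[of "Inl i"] unfolding AP_def by blast
    then show ?thesis by (simp add: Aty_def)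
  qed
  have c5: "j \<in> AQ \<Longrightarrow> v j \<le> v' j" for j using RB[of "Inr j"] unfolding AQ_def by (auto simp: Bty_def)
  have c6: "j \<notin> AQ \<Longrightarrow> v' j \<le> v j" for j
  proof -
    assume "j \<notin> AQ" then have "\<not> A (Inr j)" using RA[of "Inr j"] unfolding AQ_def by blast
    then show ?thesis by (simp add: Aty_def)
  qed
  show ?thesis
    apply (rule exI[of _ AP], rule exI[of _ AQ])
    apply (intro conjI)
    using c1 c2 c3 c4 c5 c6 by simp_all
qed

lemma combine:
  assumes bt: "bij \<tau>" and U0: "\<And>i. 0 \<le> U i" and V0: "\<And>j. 0 \<le> V j"
    and pick: "\<And>i. (U i = u i \<and> V (\<tau> i) = v (\<tau> i) \<and> \<tau> i = \<sigma> i) \<or> (U i = u' i \<and> V (\<tau> i) = v' (\<tau> i) \<and> \<tau> i = \<sigma>' i)"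
    and fl: "\<And>i j. \<not> rP i \<Longrightarrow> \<not> rQ j \<Longrightarrow> \<alpha> i j \<le> U i + V j"
    and rg: "\<And>i j. rP i \<or> rQ j \<Longrightarrow> \<beta> i j \<le> U i \<or> \<gamma> i j \<le> V j"
  shows "stab (U, V, \<tau>)"
proof -
  note s = stab_facts[OF st] and s' = stab_facts[OF st']
  have rig: "rP i \<or> rQ (\<tau> i) \<Longrightarrow> U i = \<beta> i (\<tau> i) \<and> V (\<tau> i) = \<gamma> i (\<tau> i)" for i
    using pick[of i] s(7)[of i] s'(7)[of i] by auto
  have pe: "U i + V (\<tau> i) = \<alpha> i (\<tau> i)" for i
    using pick[of i] s(6)[of i] s'(6)[of i] by auto
  have "(\<Sum>i\<in>UNIV. U i) + (\<Sum>j\<in>UNIV. V j) = (\<Sum>i\<in>UNIV. U i + V (\<tau> i))"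
    using sum_reindex_bij[OF bt, of V] by (simp add: sum.distrib)
  also have "\<dots> = (\<Sum>i\<in>UNIV. \<alpha> i (\<tau> i))" using pe by simp
  finally have sm: "(\<Sum>i\<in>UNIV. U i) + (\<Sum>j\<in>UNIV. V j) = (\<Sum>i\<in>UNIV. \<alpha> i (\<tau> i))" .
  have "feasible \<beta> \<gamma> rP rQ (U, V, \<tau>)"
    unfolding feasible_def using bt U0 V0 rig sm by (auto simp: alpha_def)
  moreover have "(\<forall>i j. \<not> rP i \<and> \<not> rQ j \<longrightarrow> \<alpha> i j \<le> U i + V j) \<and>
        (\<forall>i j. rP i \<or> rQ j \<longrightarrow> \<beta> i j \<le> U i \<or> \<gamma> i j \<le> V j)"
    using fl rg by blast
  ultimately show ?thesis unfolding rifle_stable_def by simp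
qed


lemma join_exists: "\<exists>\<tau>. stab (\<lambda>i. max (u i) (u' i), \<lambda>j. min (v j) (v' j), \<tau>)"
proof -
  note s = stab_facts[OF st] and s' = stab_facts[OF st']
  obtain AP AQ where P: "\<forall>i. i \<in> AP \<longleftrightarrow> \<sigma> i \<in> AQ" "\<forall>i. i \<in> AP \<longleftrightarrow> \<sigma>' i \<in> AQ"
     "\<forall>i\<in>AP. u' i \<le> u i" "\<forall>i. i \<notin> AP \<longrightarrow> u i \<le> u' i"
     "\<forall>j\<in>AQ. v j \<le> v' j" "\<forall>j. j \<notin> AQ \<longrightarrow> v' j \<le> v j"
    using partition by blast
  define \<tau> where "\<tau> i = (if i \<in> AP then \<sigma> i else \<sigma>' i)" for i
  have "inj \<tau>"
  proof
    fix i k assume "\<tau> i = \<tau> k"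
    then show "i = k" using P(1)[rule_format, of i] P(1)[rule_format, of k] P(2)[rule_format, of i] P(2)[rule_format, of k] bijs unfolding \<tau>_def bij_def
      by (cases "i \<in> AP"; cases "k \<in> AP") (auto dest: injD)
  qed
  then have bt: "bij \<tau>" by (rule inj_bij_finite)
  show ?thesis
  proof (intro exI[of _ \<tau>] combine[OF bt])
    fix i
    show "(max (u i) (u' i) = u i \<and> min (v (\<tau> i)) (v' (\<tau> i)) = v (\<tau> i) \<and> \<tau> i = \<sigma> i) \<or>
          (max (u i) (u' i) = u' i \<and> min (v (\<tau> i)) (v' (\<tau> i)) = v' (\<tau> i) \<and> \<tau> i = \<sigma>' i)"
      using P[rule_format, of i] P(5,6)[rule_format, of "\<sigma> i"] P(5,6)[rule_format, of "\<sigma>' i"]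
      unfolding \<tau>_def by (cases "i \<in> AP") auto
  next
    fix i j assume "\<not> rP i" "\<not> rQ j"
    then show "\<alpha> i j \<le> max (u i) (u' i) + min (v j) (v' j)" using s(4)[of i j] s'(4)[of i j] by auto
  next
    fix i j assume "rP i \<or> rQ j"
    then show "\<beta> i j \<le> max (u i) (u' i) \<or> \<gamma> i j \<le> min (v j) (v' j)" using s(5)[of i j] s'(5)[of i j] by auto
  qed (use s s' in \<open>auto simp: le_max_iff_disj\<close>)
qed

lemma meet_exists: "\<exists>\<tau>. stab (\<lambda>i. min (u i) (u' i), \<lambda>j. max (v j) (v' j), \<tau>)"
proof -
  note s = stab_facts[OF st] and s' = stab_facts[OF st']
  obtain AP AQ where P: "\<forall>i. i \<in> AP \<longleftrightarrow> \<sigma> i \<in> AQ" "\<forall>i. i \<in> AP \<longleftrightarrow> \<sigma>' i \<in> AQ"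
     "\<forall>i\<in>AP. u' i \<le> u i" "\<forall>i. i \<notin> AP \<longrightarrow> u i \<le> u' i"
     "\<forall>j\<in>AQ. v j \<le> v' j" "\<forall>j. j \<notin> AQ \<longrightarrow> v' j \<le> v j"
    using partition by blast
  define \<tau> where "\<tau> i = (if i \<in> AP then \<sigma>' i else \<sigma> i)" for i
  have "inj \<tau>"
  proof
    fix i k assume "\<tau> i = \<tau> k"
    then show "i = k" using P(1)[rule_format, of i] P(1)[rule_format, of k] P(2)[rule_format, of i] P(2)[rule_format, of k] bijs unfolding \<tau>_def bij_def
      by (cases "i \<in> AP"; cases "k \<in> AP") (auto dest: injD)
  qed
  then have bt: "bij \<tau>" by (rule inj_bij_finite)
  show ?thesis
  proof (intro exI[of _ \<tau>] combine[OF bt])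
    fix i
    show "(min (u i) (u' i) = u i \<and> max (v (\<tau> i)) (v' (\<tau> i)) = v (\<tau> i) \<and> \<tau> i = \<sigma> i) \<or>
          (min (u i) (u' i) = u' i \<and> max (v (\<tau> i)) (v' (\<tau> i)) = v' (\<tau> i) \<and> \<tau> i = \<sigma>' i)"
      using P[rule_format, of i] P(5,6)[rule_format, of "\<sigma> i"] P(5,6)[rule_format, of "\<sigma>' i"]
      unfolding \<tau>_def by (cases "i \<in> AP") auto
  next
    fix i j assume "\<not> rP i" "\<not> rQ j"
    then show "\<alpha> i j \<le> min (u i) (u' i) + max (v j) (v' j)" using s(4)[of i j] s'(4)[of i j] by auto
  next
    fix i j assume "rP i \<or> rQ j"
    then show "\<beta> i j \<le> min (u i) (u' i) \<or> \<gamma> i j \<le> max (v j) (v' j)" using s(5)[of i j] s'(5)[of i j] by auto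
  qed (use s s' in \<open>auto simp: le_max_iff_disj\<close>)
qed

end
end


definition unvec :: "(real^'n) \<times> (real^'n) \<Rightarrow> ('n \<Rightarrow> 'n) \<Rightarrow> 'n outcome" where
  "unvec p \<sigma> = ((\<lambda>i. fst p $ i), (\<lambda>j. snd p $ j), \<sigma>)"

definition pt :: "'n outcome \<Rightarrow> (real^'n) \<times> (real^'n)" where
  "pt x = (vec_lambda (fst x), vec_lambda (fst (snd x)))"

lemma cont_comp1: "continuous_on UNIV (\<lambda>p::(real^'n) \<times> (real^'n). fst p $ i)"
  by (intro continuous_intros)
lemma cont_comp2: "continuous_on UNIV (\<lambda>p::(real^'n) \<times> (real^'n). snd p $ i)"
  by (intro continuous_intros)

context rifle
begin

lemma closed_stab: "closed {p. stab (unvec p \<sigma>)}"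
proof -
  have e: "{p. stab (unvec p \<sigma>)} = {p. bij \<sigma> \<and>
        (\<forall>i. 0 \<le> fst p $ i) \<and> (\<forall>j. 0 \<le> snd p $ j) \<and>
        (\<forall>i. rP i \<longrightarrow> fst p $ i = \<beta> i (\<sigma> i) \<and> (\<not> rQ (\<sigma> i) \<longrightarrow> \<gamma> i (\<sigma> i) \<le> snd p $ (\<sigma> i))) \<and>
        (\<forall>i. rQ (\<sigma> i) \<longrightarrow> snd p $ (\<sigma> i) = \<gamma> i (\<sigma> i) \<and> (\<not> rP i \<longrightarrow> \<beta> i (\<sigma> i) \<le> fst p $ i)) \<and>
        (\<Sum>i\<in>UNIV. fst p $ i) + (\<Sum>j\<in>UNIV. snd p $ j) = (\<Sum>i\<in>UNIV. \<alpha> i (\<sigma> i)) \<and>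
        (\<forall>i j. \<not> rP i \<and> \<not> rQ j \<longrightarrow> \<alpha> i j \<le> fst p $ i + snd p $ j) \<and>
        (\<forall>i j. rP i \<or> rQ j \<longrightarrow> \<beta> i j \<le> fst p $ i \<or> \<gamma> i j \<le> snd p $ j)}"
    unfolding unvec_def rifle_stable_def feasible_def by simp
  show ?thesis unfolding e
    by (intro closed_Collect_conj closed_Collect_all closed_Collect_imp closed_Collect_disj
        closed_Collect_le closed_Collect_eq closed_Collect_const open_Collect_const
        continuous_intros)
qed

lemma closed_geP1: "closed {p. geP (unvec p \<sigma>) a}"
  unfolding geP_def unvec_def
  by (simp, intro closed_Collect_conj closed_Collect_all closed_Collect_le continuous_intros)

lemma closed_geP2: "closed {p. geP a (unvec p \<sigma>)}"
  unfolding geP_def unvec_def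
  by (simp, intro closed_Collect_conj closed_Collect_all closed_Collect_le continuous_intros)

lemma closed_Ball: "(\<And>a. closed {p. P a p}) \<Longrightarrow> closed {p. \<forall>a\<in>A. P a p}"
  using closed_INT[of A "\<lambda>a. {p. P a p}"] by (simp add: Collect_ball_eq)
lemma pt_unvec: "pt (unvec p \<sigma>) = p"
  unfolding pt_def unvec_def by (cases p) (simp add: vec_lambda_eta)

lemma unvec_pt: "unvec (pt (u, v, \<sigma>)) \<sigma> = (u, v, \<sigma>)"
  unfolding pt_def unvec_def by (simp add: fun_eq_iff)

lemma stab_bound:
  assumes "stab (u, v, \<sigma>)"
  shows "u i \<le> (\<Sum>i\<in>UNIV. \<Sum>j\<in>UNIV. \<alpha> i j)" "v j \<le> (\<Sum>i\<in>UNIV. \<Sum>j\<in>UNIV. \<alpha> i j)"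
proof -
  note s = stab_facts[OF assms]
  have sm: "(\<Sum>i\<in>UNIV. u i) + (\<Sum>j\<in>UNIV. v j) = (\<Sum>i\<in>UNIV. \<alpha> i (\<sigma> i))"
    using sum_reindex_bij[OF s(1), of v] s(6) by (simp add: sum.distrib[symmetric])
  have a0: "0 \<le> \<alpha> i j" for i j using nonneg[of i j] by (simp add: alpha_def)
  have "(\<Sum>i\<in>UNIV. \<alpha> i (\<sigma> i)) \<le> (\<Sum>i\<in>UNIV. \<Sum>j\<in>UNIV. \<alpha> i j)"
    by (intro sum_mono member_le_sum) (auto simp: a0)
  moreover have "u i \<le> (\<Sum>i\<in>UNIV. u i)" by (rule member_le_sum) (auto simp: s(2))
  moreover have "v j \<le> (\<Sum>j\<in>UNIV. v j)" by (rule member_le_sum) (auto simp: s(3))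
  moreover have "0 \<le> (\<Sum>i\<in>UNIV. u i)" "0 \<le> (\<Sum>j\<in>UNIV. v j)" by (auto intro: sum_nonneg simp: s(2,3))
  ultimately show "u i \<le> (\<Sum>i\<in>UNIV. \<Sum>j\<in>UNIV. \<alpha> i j)" "v j \<le> (\<Sum>i\<in>UNIV. \<Sum>j\<in>UNIV. \<alpha> i j)"
    using sm by linarith+
qed

lemma compact_T:
  assumes cl: "\<And>\<sigma>. closed {p. R (unvec p \<sigma>)}"
  shows "compact (pt ` {x. stab x \<and> R x})"
proof -
  let ?T = "{x. stab x \<and> R x}"
  have eq: "pt ` ?T = (\<Union>\<sigma>\<in>UNIV. {p. stab (unvec p \<sigma>)} \<inter> {p. R (unvec p \<sigma>)})"
  proof (intro equalityI subsetI)
    fix p assume "p \<in> pt ` ?T"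
    then obtain u v \<sigma> where "stab (u, v, \<sigma>)" "R (u, v, \<sigma>)" "p = pt (u, v, \<sigma>)" by auto
    then show "p \<in> (\<Union>\<sigma>\<in>UNIV. {p. stab (unvec p \<sigma>)} \<inter> {p. R (unvec p \<sigma>)})"
      by (auto intro!: exI[of _ \<sigma>] simp: unvec_pt)
  next
    fix p assume "p \<in> (\<Union>\<sigma>\<in>UNIV. {p. stab (unvec p \<sigma>)} \<inter> {p. R (unvec p \<sigma>)})"
    then obtain \<sigma> where "stab (unvec p \<sigma>)" "R (unvec p \<sigma>)" by auto
    then show "p \<in> pt ` ?T" using pt_unvec[of p \<sigma>] by (metis (mono_tags, lifting) image_eqI mem_Collect_eq)
  qed
  have "closed (pt ` ?T)" unfolding eq
    by (rule closed_UN) (auto intro: closed_Int closed_stab cl)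
  moreover have "bounded (pt ` ?T)"
  proof -
    define M where "M = (\<Sum>i\<in>UNIV. \<Sum>j\<in>UNIV. \<alpha> i j)"
    have "norm p \<le> real CARD('n) * M + real CARD('n) * M" if "p \<in> pt ` ?T" for p
    proof -
      obtain u v \<sigma> where x: "stab (u, v, \<sigma>)" "p = pt (u, v, \<sigma>)" using \<open>p \<in> pt ` ?T\<close> by auto
      note b = stab_bound[OF x(1)] and s = stab_facts[OF x(1)]
      have "norm (vec_lambda u) \<le> real CARD('n) * M"
      proof -
        have "norm (vec_lambda u) \<le> (\<Sum>i\<in>UNIV. \<bar>vec_lambda u $ i\<bar>)" by (rule norm_le_l1_cart)
        also have "\<dots> \<le> (\<Sum>i\<in>(UNIV::'n set). M)" by (rule sum_mono) (use b(1) s(2) in \<open>auto simp: M_def\<close>)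
        finally show ?thesis by simp
      qed
      moreover have "norm (vec_lambda v) \<le> real CARD('n) * M"
      proof -
        have "norm (vec_lambda v) \<le> (\<Sum>i\<in>UNIV. \<bar>vec_lambda v $ i\<bar>)" by (rule norm_le_l1_cart)
        also have "\<dots> \<le> (\<Sum>i\<in>(UNIV::'n set). M)" by (rule sum_mono) (use b(2) s(3) in \<open>auto simp: M_def\<close>)
        finally show ?thesis by simp
      qed
      ultimately show ?thesis using x(2) norm_Pair_le[of "vec_lambda u" "vec_lambda v"] unfolding pt_def by (simp add: algebra_simps)
    qed
    then show ?thesis unfolding bounded_iff by blast
  qed
  ultimately show ?thesis using compact_eq_bounded_closed by blast
qed

definition obj :: "(real^'n) \<times> (real^'n) \<Rightarrow> real" where
  "obj p = (\<Sum>i\<in>UNIV. fst p $ i) - (\<Sum>j\<in>UNIV. snd p $ j)"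

lemma obj_pt: "obj (pt (u, v, \<sigma>)) = (\<Sum>i\<in>UNIV. u i) - (\<Sum>j\<in>UNIV. v j)"
  unfolding obj_def pt_def by simp

lemma cont_obj: "continuous_on S obj"
  unfolding obj_def by (intro continuous_intros)

lemma min_meet:
  assumes cl: "\<And>\<sigma>. closed {p. R (unvec p \<sigma>)}"
    and ne: "\<exists>x. stab x \<and> R x"
    and mc: "\<And>x y. stab x \<Longrightarrow> R x \<Longrightarrow> stab y \<Longrightarrow> R y \<Longrightarrow>
       \<exists>z. stab z \<and> R z \<and> fst z = (\<lambda>i. min (fst x i) (fst y i)) \<and> fst (snd z) = (\<lambda>j. max (fst (snd x) j) (fst (snd y) j))"
  shows "\<exists>m. stab m \<and> R m \<and> (\<forall>t. stab t \<and> R t \<longrightarrow> geP t m)"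
proof -
  let ?T = "{x. stab x \<and> R x}"
  have "pt ` ?T \<noteq> {}" using ne by auto
  from continuous_attains_inf[OF compact_T[OF cl] this cont_obj]
  obtain m where m: "stab m" "R m" and mmin: "\<And>t. stab t \<Longrightarrow> R t \<Longrightarrow> obj (pt m) \<le> obj (pt t)" by auto
  obtain mu mv m\<sigma> where md: "m = (mu, mv, m\<sigma>)" by (cases m)
  show ?thesis
  proof (intro exI[of _ m] conjI m allI impI)
    fix t assume t: "stab t \<and> R t"
    obtain tu tv t\<sigma> where td: "t = (tu, tv, t\<sigma>)" by (cases t)
    obtain z where z: "stab z" "R z" "fst z = (\<lambda>i. min (mu i) (tu i))" "fst (snd z) = (\<lambda>j. max (mv j) (tv j))"
      using mc[OF m, of t] t md td by auto
    obtain z\<sigma> where zd: "z = ((\<lambda>i. min (mu i) (tu i)), (\<lambda>j. max (mv j) (tv j)), z\<sigma>)"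
      using z(3,4) by (cases z) auto
    have "obj (pt m) \<le> obj (pt z)" using mmin z by auto
    then have le: "(\<Sum>i\<in>UNIV. mu i) - (\<Sum>j\<in>UNIV. mv j) \<le> (\<Sum>i\<in>UNIV. min (mu i) (tu i)) - (\<Sum>j\<in>UNIV. max (mv j) (tv j))"
      unfolding md zd obj_pt .
    have "(\<Sum>i\<in>UNIV. mu i - min (mu i) (tu i)) + (\<Sum>j\<in>UNIV. max (mv j) (tv j) - mv j) \<le> 0"
      using le by (simp add: sum_subtractf)
    moreover have n1: "0 \<le> (\<Sum>i\<in>UNIV. mu i - min (mu i) (tu i))" "0 \<le> (\<Sum>j\<in>UNIV. max (mv j) (tv j) - mv j)"
      by (auto intro: sum_nonneg)
    ultimately have z1: "(\<Sum>i\<in>UNIV. mu i - min (mu i) (tu i)) = 0" and z2: "(\<Sum>j\<in>UNIV. max (mv j) (tv j) - mv j) = 0"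
      by linarith+
    have "\<forall>i\<in>UNIV. mu i - min (mu i) (tu i) = 0"
      using sum_nonneg_eq_0_iff[of UNIV "\<lambda>i. mu i - min (mu i) (tu i)"] z1 by simp
    moreover have "\<forall>j\<in>UNIV. max (mv j) (tv j) - mv j = 0"
      using sum_nonneg_eq_0_iff[of UNIV "\<lambda>j. max (mv j) (tv j) - mv j"] z2 by simp
    ultimately have "\<And>i. mu i \<le> tu i" "\<And>j. tv j \<le> mv j"
      by (metis min.absorb_iff1 eq_iff_diff_eq_0 UNIV_I, metis max.absorb_iff1 eq_iff_diff_eq_0 UNIV_I)
    then show "geP t m" unfolding geP_def md td by simp
  qed
qed

lemma max_join:
  assumes cl: "\<And>\<sigma>. closed {p. R (unvec p \<sigma>)}"
    and ne: "\<exists>x. stab x \<and> R x"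
    and mc: "\<And>x y. stab x \<Longrightarrow> R x \<Longrightarrow> stab y \<Longrightarrow> R y \<Longrightarrow>
       \<exists>z. stab z \<and> R z \<and> fst z = (\<lambda>i. max (fst x i) (fst y i)) \<and> fst (snd z) = (\<lambda>j. min (fst (snd x) j) (fst (snd y) j))"
  shows "\<exists>m. stab m \<and> R m \<and> (\<forall>t. stab t \<and> R t \<longrightarrow> geP m t)"
proof -
  let ?T = "{x. stab x \<and> R x}"
  have "pt ` ?T \<noteq> {}" using ne by auto
  from continuous_attains_sup[OF compact_T[OF cl] this cont_obj]
  obtain m where m: "stab m" "R m" and mmax: "\<And>t. stab t \<Longrightarrow> R t \<Longrightarrow> obj (pt t) \<le> obj (pt m)" by auto
  obtain mu mv m\<sigma> where md: "m = (mu, mv, m\<sigma>)" by (cases m)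
  show ?thesis
  proof (intro exI[of _ m] conjI m allI impI)
    fix t assume t: "stab t \<and> R t"
    obtain tu tv t\<sigma> where td: "t = (tu, tv, t\<sigma>)" by (cases t)
    obtain z where z: "stab z" "R z" "fst z = (\<lambda>i. max (mu i) (tu i))" "fst (snd z) = (\<lambda>j. min (mv j) (tv j))"
      using mc[OF m, of t] t md td by auto
    obtain z\<sigma> where zd: "z = ((\<lambda>i. max (mu i) (tu i)), (\<lambda>j. min (mv j) (tv j)), z\<sigma>)"
      using z(3,4) by (cases z) auto
    have "obj (pt z) \<le> obj (pt m)" using mmax z by auto
    then have le: "(\<Sum>i\<in>UNIV. max (mu i) (tu i)) - (\<Sum>j\<in>UNIV. min (mv j) (tv j)) \<le> (\<Sum>i\<in>UNIV. mu i) - (\<Sum>j\<in>UNIV. mv j)"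
      unfolding md zd obj_pt .
    have "(\<Sum>i\<in>UNIV. max (mu i) (tu i) - mu i) + (\<Sum>j\<in>UNIV. mv j - min (mv j) (tv j)) \<le> 0"
      using le by (simp add: sum_subtractf)
    moreover have n1: "0 \<le> (\<Sum>i\<in>UNIV. max (mu i) (tu i) - mu i)" "0 \<le> (\<Sum>j\<in>UNIV. mv j - min (mv j) (tv j))"
      by (auto intro: sum_nonneg)
    ultimately have z1: "(\<Sum>i\<in>UNIV. max (mu i) (tu i) - mu i) = 0" and z2: "(\<Sum>j\<in>UNIV. mv j - min (mv j) (tv j)) = 0"
      by linarith+
    have "\<forall>i\<in>UNIV. max (mu i) (tu i) - mu i = 0"
      using sum_nonneg_eq_0_iff[of UNIV "\<lambda>i. max (mu i) (tu i) - mu i"] z1 by simp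
    moreover have "\<forall>j\<in>UNIV. mv j - min (mv j) (tv j) = 0"
      using sum_nonneg_eq_0_iff[of UNIV "\<lambda>j. mv j - min (mv j) (tv j)"] z2 by simp
    ultimately have "\<And>i. tu i \<le> mu i" "\<And>j. mv j \<le> tv j"
      by (metis max.absorb_iff1 eq_iff_diff_eq_0 UNIV_I, metis min.absorb_iff1 eq_iff_diff_eq_0 UNIV_I)
    then show "geP m t" unfolding geP_def md td by simp
  qed
qed

end


context rifle_nd
begin

lemma geP_antisym_eq:
  assumes "stab x" "stab y" "geP x y" "geP y x" shows "x = y"
proof -
  obtain u v \<sigma> where x: "x = (u, v, \<sigma>)" by (cases x)
  obtain u' v' \<sigma>' where y: "y = (u', v', \<sigma>')" by (cases y)
  have "u = u'" "v = v'" using assms(3,4) unfolding x y geP_def by (auto intro!: ext order_antisym)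
  moreover then have "\<sigma> = \<sigma>'" using antisym_stab assms(1,2) unfolding x y by blast
  ultimately show ?thesis using x y by simp
qed

lemma join_ex: "stab x \<Longrightarrow> stab y \<Longrightarrow>
   \<exists>z. stab z \<and> fst z = (\<lambda>i. max (fst x i) (fst y i)) \<and> fst (snd z) = (\<lambda>j. min (fst (snd x) j) (fst (snd y) j))"
  using join_exists[of "fst x" "fst (snd x)" "snd (snd x)" "fst y" "fst (snd y)" "snd (snd y)"] by auto

lemma meet_ex: "stab x \<Longrightarrow> stab y \<Longrightarrow>
   \<exists>z. stab z \<and> fst z = (\<lambda>i. min (fst x i) (fst y i)) \<and> fst (snd z) = (\<lambda>j. max (fst (snd x) j) (fst (snd y) j))"
  using meet_exists[of "fst x" "fst (snd x)" "snd (snd x)" "fst y" "fst (snd y)" "snd (snd y)"] by auto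

lemma main_lattice:
  assumes ex: "\<exists>x. stab x"
  shows "(\<forall>x y. stab x \<and> stab y \<and> geP x y \<and> geP y x \<longrightarrow> x = y)
       \<and> (\<forall>A \<subseteq> {x. stab x}. (\<exists>s. is_lubP {x. stab x} A s) \<and> (\<exists>s. is_glbP {x. stab x} A s))
       \<and> (\<exists>!x. stab x \<and> (\<forall>y. stab y \<longrightarrow> geP x y))
       \<and> (\<exists>!x. stab x \<and> (\<forall>y. stab y \<longrightarrow> geP y x))"
proof -
  have clT: "closed {p. True}" by simp
  obtain top where top: "stab top" "\<And>t. stab t \<Longrightarrow> geP top t"
    using max_join[of "\<lambda>_. True"] ex join_ex by auto
  obtain bot where bot: "stab bot" "\<And>t. stab t \<Longrightarrow> geP t bot"
    using min_meet[of "\<lambda>_. True"] ex meet_ex by auto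
  have as: "\<forall>x y. stab x \<and> stab y \<and> geP x y \<and> geP y x \<longrightarrow> x = y" using geP_antisym_eq by blast
  have lat: "(\<exists>s. is_lubP {x. stab x} A s) \<and> (\<exists>s. is_glbP {x. stab x} A s)" if A: "A \<subseteq> {x. stab x}" for A
  proof
    have "\<exists>m. stab m \<and> (\<forall>a\<in>A. geP m a) \<and> (\<forall>t. stab t \<and> (\<forall>a\<in>A. geP t a) \<longrightarrow> geP t m)"
    proof (rule min_meet)
      show "closed {p. \<forall>a\<in>A. geP (unvec p \<sigma>) a}" for \<sigma> by (intro closed_Ball closed_geP1)
      show "\<exists>x. stab x \<and> (\<forall>a\<in>A. geP x a)" using top A by blast
      fix x y assume h: "stab x" "\<forall>a\<in>A. geP x a" "stab y" "\<forall>a\<in>A. geP y a"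
      obtain z where z: "stab z" "fst z = (\<lambda>i. min (fst x i) (fst y i))" "fst (snd z) = (\<lambda>j. max (fst (snd x) j) (fst (snd y) j))"
        using meet_ex[OF h(1,3)] by blast
      have "\<forall>a\<in>A. geP z a" using h(2,4) z(2,3) unfolding geP_def by auto
      then show "\<exists>z. stab z \<and> (\<forall>a\<in>A. geP z a) \<and> fst z = (\<lambda>i. min (fst x i) (fst y i)) \<and> fst (snd z) = (\<lambda>j. max (fst (snd x) j) (fst (snd y) j))"
        using z by blast
    qed
    then show "\<exists>s. is_lubP {x. stab x} A s" unfolding is_lubP_def Ball_def mem_Collect_eq by blast
  next
    have "\<exists>m. stab m \<and> (\<forall>a\<in>A. geP a m) \<and> (\<forall>t. stab t \<and> (\<forall>a\<in>A. geP a t) \<longrightarrow> geP m t)"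
    proof (rule max_join)
      show "closed {p. \<forall>a\<in>A. geP a (unvec p \<sigma>)}" for \<sigma> by (intro closed_Ball closed_geP2)
      show "\<exists>x. stab x \<and> (\<forall>a\<in>A. geP a x)" using bot A by blast
      fix x y assume h: "stab x" "\<forall>a\<in>A. geP a x" "stab y" "\<forall>a\<in>A. geP a y"
      obtain z where z: "stab z" "fst z = (\<lambda>i. max (fst x i) (fst y i))" "fst (snd z) = (\<lambda>j. min (fst (snd x) j) (fst (snd y) j))"
        using join_ex[OF h(1,3)] by blast
      have "\<forall>a\<in>A. geP a z" using h(2,4) z(2,3) unfolding geP_def by auto
      then show "\<exists>z. stab z \<and> (\<forall>a\<in>A. geP a z) \<and> fst z = (\<lambda>i. max (fst x i) (fst y i)) \<and> fst (snd z) = (\<lambda>j. min (fst (snd x) j) (fst (snd y) j))"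
        using z by blast
    qed
    then show "\<exists>s. is_glbP {x. stab x} A s" unfolding is_glbP_def Ball_def mem_Collect_eq by blast
  qed
  have u1: "\<exists>!x. stab x \<and> (\<forall>y. stab y \<longrightarrow> geP x y)"
    using top as by (metis)
  have u2: "\<exists>!x. stab x \<and> (\<forall>y. stab y \<longrightarrow> geP y x)"
    using bot as by (metis)
  show ?thesis using as lat u1 u2 by blast
qed

end


datatype key = Key real nat

instantiation key :: linorder
begin
fun less_eq_key :: "key \<Rightarrow> key \<Rightarrow> bool" where
  "less_eq_key (Key a m) (Key b k) = (a < b \<or> (a = b \<and> m \<le> k))"
fun less_key :: "key \<Rightarrow> key \<Rightarrow> bool" where
  "less_key (Key a m) (Key b k) = (a < b \<or> (a = b \<and> m < k))"
instance
proof
  fix x y z :: key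
  show "(x < y) = (x \<le> y \<and> \<not> y \<le> x)" by (cases x; cases y) auto
  show "x \<le> x" by (cases x) auto
  show "x \<le> y \<Longrightarrow> y \<le> z \<Longrightarrow> x \<le> z" by (cases x; cases y; cases z) auto
  show "x \<le> y \<Longrightarrow> y \<le> x \<Longrightarrow> x = y" by (cases x; cases y) auto
  show "x \<le> y \<or> y \<le> x" by (cases x; cases y) auto
qed
end

lemma key_le_fst: "Key a m \<le> Key b k \<Longrightarrow> a \<le> b" by auto

definition Ch :: "('c \<Rightarrow> 'p) \<Rightarrow> ('c \<Rightarrow> 'k::linorder) \<Rightarrow> 'c set \<Rightarrow> 'c set" where
  "Ch f k Y = {c\<in>Y. \<forall>d\<in>Y. f d = f c \<longrightarrow> k d \<le> k c}"

lemma Rj_mono: "Y \<subseteq> Y' \<Longrightarrow> Y - Ch f k Y \<subseteq> Y' - Ch f k Y'"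
  unfolding Ch_def by auto

lemma max_exists:
  fixes k :: "'c \<Rightarrow> 'k::linorder"
  assumes "finite Y" "c \<in> Y"
  shows "\<exists>a\<in>Ch f k Y. f a = f c"
proof -
  let ?S = "{d\<in>Y. f d = f c}"
  have "finite ?S" "?S \<noteq> {}" using assms by auto
  have "Max (k ` ?S) \<in> k ` ?S" using \<open>finite ?S\<close> \<open>?S \<noteq> {}\<close> by (intro Max_in) auto
  then obtain a where a: "a \<in> ?S" "k a = Max (k ` ?S)" by auto
  have "\<forall>d\<in>?S. k d \<le> k a" using a(2) \<open>finite ?S\<close> by (auto intro: Max_ge)
  then have "a \<in> Y" "f a = f c" "\<forall>d\<in>Y. f d = f c \<longrightarrow> k d \<le> k a" using a(1) by auto
  then show ?thesis unfolding Ch_def by auto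
qed

lemma hm:
  fixes X :: "'c set" and pa :: "'c \<Rightarrow> 'p" and qa :: "'c \<Rightarrow> 'q" and kp kq :: "'c \<Rightarrow> 'k::linorder"
  assumes fin: "finite X"
    and injp: "\<And>c d. c \<in> X \<Longrightarrow> d \<in> X \<Longrightarrow> pa c = pa d \<Longrightarrow> kp c = kp d \<Longrightarrow> c = d"
    and injq: "\<And>c d. c \<in> X \<Longrightarrow> d \<in> X \<Longrightarrow> qa c = qa d \<Longrightarrow> kq c = kq d \<Longrightarrow> c = d"
  shows "\<exists>Acc \<subseteq> X. (\<forall>c\<in>Acc. \<forall>d\<in>Acc. pa c = pa d \<longrightarrow> c = d) \<and> (\<forall>c\<in>Acc. \<forall>d\<in>Acc. qa c = qa d \<longrightarrow> c = d)
     \<and> (\<forall>c\<in>X. (\<exists>a\<in>Acc. pa a = pa c \<and> kp c \<le> kp a) \<or> (\<exists>a\<in>Acc. qa a = qa c \<and> kq c \<le> kq a))"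
proof -
  define G where "G Z = X - (let W = X - (Z - Ch pa kp Z) in W - Ch qa kq W)" for Z
  have "mono G"
  proof
    fix Z Z' :: "'c set" assume "Z \<subseteq> Z'"
    then have "Z - Ch pa kp Z \<subseteq> Z' - Ch pa kp Z'" by (rule Rj_mono)
    then have "X - (Z' - Ch pa kp Z') \<subseteq> X - (Z - Ch pa kp Z)" by auto
    then have "(X - (Z' - Ch pa kp Z')) - Ch qa kq (X - (Z' - Ch pa kp Z')) \<subseteq> (X - (Z - Ch pa kp Z)) - Ch qa kq (X - (Z - Ch pa kp Z))"
      by (rule Rj_mono)
    then show "G Z \<subseteq> G Z'" unfolding G_def Let_def by auto
  qed
  define Z where "Z = lfp G"
  have Zeq: "Z = G Z" unfolding Z_def using lfp_unfold[OF \<open>mono G\<close>] .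
  define W where "W = X - (Z - Ch pa kp Z)"
  have ZW: "Z = X - (W - Ch qa kq W)" using Zeq unfolding G_def W_def Let_def by simp
  have ZX: "Z \<subseteq> X" using ZW by auto
  have WX: "W \<subseteq> X" unfolding W_def by auto
  have ChZ: "Ch pa kp Z \<subseteq> Z" and ChW: "Ch qa kq W \<subseteq> W" unfolding Ch_def by auto
  have e1: "Ch pa kp Z = Z \<inter> W" using ZX ChZ unfolding W_def by auto
  have e2: "Ch qa kq W = W \<inter> Z" using WX ChW ZW by auto
  define Acc where "Acc = Ch pa kp Z"
  have AX: "Acc \<subseteq> X" unfolding Acc_def using ChZ ZX by auto
  show ?thesis
  proof (intro exI[of _ Acc] conjI ballI impI)
    show "Acc \<subseteq> X" unfolding Acc_def using ChZ ZX by auto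
  next
    fix c d assume "c \<in> Acc" "d \<in> Acc" "pa c = pa d"
    then have "kp c = kp d" unfolding Acc_def Ch_def by (metis (mono_tags, lifting) mem_Collect_eq order_antisym)
    then show "c = d" using injp \<open>c \<in> Acc\<close> \<open>d \<in> Acc\<close> \<open>pa c = pa d\<close> AX by auto
  next
    fix c d assume "c \<in> Acc" "d \<in> Acc" "qa c = qa d"
    then have cd: "c \<in> Ch qa kq W" "d \<in> Ch qa kq W" unfolding Acc_def using e1 e2 by auto
    then have "kq c = kq d" using \<open>qa c = qa d\<close> unfolding Ch_def by (metis (mono_tags, lifting) mem_Collect_eq order_antisym)
    then show "c = d" using injq cd ChW WX \<open>qa c = qa d\<close> by auto
  next
    fix c assume cX: "c \<in> X"
    show "(\<exists>a\<in>Acc. pa a = pa c \<and> kp c \<le> kp a) \<or> (\<exists>a\<in>Acc. qa a = qa c \<and> kq c \<le> kq a)"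
    proof (cases "c \<in> Z")
      case True
      have "finite Z" using ZX fin finite_subset by auto
      from max_exists[OF this True, of pa kp] obtain a where a: "a \<in> Ch pa kp Z" "pa a = pa c" by blast
      then have "kp c \<le> kp a" using True unfolding Ch_def by auto
      then show ?thesis using a unfolding Acc_def by auto
    next
      case False
      then have cW: "c \<in> W" using cX unfolding W_def by auto
      have "finite W" using WX fin finite_subset by auto
      from max_exists[OF this cW, of qa kq] obtain a where a: "a \<in> Ch qa kq W" "qa a = qa c" by blast
      then have "kq c \<le> kq a" using cW unfolding Ch_def by auto
      moreover have "a \<in> Acc" using a e1 e2 unfolding Acc_def by auto
      ultimately show ?thesis using a by auto
    qed
  qed
qed


context rifle
begin

definition contracts :: "real \<Rightarrow> ('n \<times> 'n \<times> real \<times> real) set" where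
  "contracts \<delta> = {(i, j, \<beta> i j, \<gamma> i j) | i j. rP i \<or> rQ j} \<union>
     {(i, j, real k * \<delta>, \<alpha> i j - real k * \<delta>) | i j k. \<not> rP i \<and> \<not> rQ j \<and> real k * \<delta> \<le> \<alpha> i j}"

lemma contract_cases:
  assumes "(i, j, a, b) \<in> contracts \<delta>" "\<delta> > 0"
  shows "(rP i \<or> rQ j \<longrightarrow> a = \<beta> i j \<and> b = \<gamma> i j) \<and> (\<not> rP i \<and> \<not> rQ j \<longrightarrow> a + b = \<alpha> i j \<and> 0 \<le> a \<and> 0 \<le> b)"
  using assms unfolding contracts_def by auto

lemma contracts_finite:
  assumes "\<delta> > 0"
  shows "finite (contracts \<delta>)"
proof -
  have f1: "finite {(i, j, \<beta> i j, \<gamma> i j) | i j. rP i \<or> rQ j}"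
  proof -
    have "{(i, j, \<beta> i j, \<gamma> i j) | i j. rP i \<or> rQ j} \<subseteq> (\<lambda>(i,j). (i, j, \<beta> i j, \<gamma> i j)) ` UNIV" by auto
    then show ?thesis by (rule finite_subset) auto
  qed
  have fk: "finite {k::nat. real k * \<delta> \<le> c}" for c
  proof -
    have "{k::nat. real k * \<delta> \<le> c} \<subseteq> {..nat \<lceil>c / \<delta>\<rceil>}"
    proof
      fix k assume "k \<in> {k::nat. real k * \<delta> \<le> c}"
      then have "real k \<le> c / \<delta>" using assms by (simp add: field_simps)
      then have "real k \<le> \<lceil>c / \<delta>\<rceil>" by linarith
      then have "int k \<le> \<lceil>c / \<delta>\<rceil>" by (metis of_int_le_iff of_int_of_nat_eq)
      then show "k \<in> {..nat \<lceil>c / \<delta>\<rceil>}" by (simp add: le_nat_iff)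
    qed
    then show ?thesis by (rule finite_subset) auto
  qed
  have sub: "{(i, j, real k * \<delta>, \<alpha> i j - real k * \<delta>) | i j k. \<not> rP i \<and> \<not> rQ j \<and> real k * \<delta> \<le> \<alpha> i j}
     \<subseteq> (\<Union>ij\<in>UNIV. (\<lambda>k. (fst ij, snd ij, real k * \<delta>, \<alpha> (fst ij) (snd ij) - real k * \<delta>)) ` {k. real k * \<delta> \<le> \<alpha> (fst ij) (snd ij)})"
    by force
  moreover have fU: "finite (\<Union>ij\<in>UNIV. (\<lambda>k. (fst ij, snd ij, real k * \<delta>, \<alpha> (fst ij) (snd ij) - real k * \<delta>)) ` {k. real k * \<delta> \<le> \<alpha> (fst ij) (snd ij)})"
    using fk by auto
  have "finite {(i, j, real k * \<delta>, \<alpha> i j - real k * \<delta>) | i j k. \<not> rP i \<and> \<not> rQ j \<and> real k * \<delta> \<le> \<alpha> i j}"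
    using finite_subset[OF sub fU] .
  then show ?thesis unfolding contracts_def using f1 by simp
qed

lemma approx:
  assumes d0: "\<delta> > 0"
  shows "\<exists>u v \<sigma>. feasible \<beta> \<gamma> rP rQ (u, v, \<sigma>) \<and> (\<forall>i j. rP i \<or> rQ j \<longrightarrow> \<beta> i j \<le> u i \<or> \<gamma> i j \<le> v j)
     \<and> (\<forall>i j. \<not> rP i \<and> \<not> rQ j \<longrightarrow> \<alpha> i j - \<delta> \<le> u i + v j)"
proof -
  let ?X = "contracts \<delta>"
  define pa :: "'n \<times> 'n \<times> real \<times> real \<Rightarrow> 'n" where "pa c = fst c" for c
  define qa :: "'n \<times> 'n \<times> real \<times> real \<Rightarrow> 'n" where "qa c = fst (snd c)" for c
  define kp where "kp c = Key (fst (snd (snd c))) (to_nat (fst (snd c)))" for c :: "'n \<times> 'n \<times> real \<times> real"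
  define kq where "kq c = Key (snd (snd (snd c))) (to_nat (fst c))" for c :: "'n \<times> 'n \<times> real \<times> real"
  have injp: "c = d" if "c \<in> ?X" "d \<in> ?X" "pa c = pa d" "kp c = kp d" for c d
  proof -
    obtain i j a b where c: "c = (i, j, a, b)" by (cases c) auto
    obtain i' j' a' b' where d: "d = (i', j', a', b')" by (cases d) auto
    have e: "i = i'" "a = a'" "j = j'" using that(3,4) unfolding c d pa_def kp_def by auto
    have c1: "(rP i \<or> rQ j \<longrightarrow> a = \<beta> i j \<and> b = \<gamma> i j) \<and> (\<not> rP i \<and> \<not> rQ j \<longrightarrow> a + b = \<alpha> i j)"
      using contract_cases[OF that(1)[unfolded c] d0] by blast
    have c2: "(rP i \<or> rQ j \<longrightarrow> a' = \<beta> i j \<and> b' = \<gamma> i j) \<and> (\<not> rP i \<and> \<not> rQ j \<longrightarrow> a' + b' = \<alpha> i j)"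
      using contract_cases[OF that(2)[unfolded d] d0] e by blast
    have "b = b'" using c1 c2 e(2) by (cases "rP i \<or> rQ j") linarith+
    then show ?thesis using c d e by simp
  qed
  have injq: "c = d" if "c \<in> ?X" "d \<in> ?X" "qa c = qa d" "kq c = kq d" for c d
  proof -
    obtain i j a b where c: "c = (i, j, a, b)" by (cases c) auto
    obtain i' j' a' b' where d: "d = (i', j', a', b')" by (cases d) auto
    have e: "j = j'" "b = b'" "i = i'" using that(3,4) unfolding c d qa_def kq_def by auto
    have c1: "(rP i \<or> rQ j \<longrightarrow> a = \<beta> i j \<and> b = \<gamma> i j) \<and> (\<not> rP i \<and> \<not> rQ j \<longrightarrow> a + b = \<alpha> i j)"
      using contract_cases[OF that(1)[unfolded c] d0] by blast
    have c2: "(rP i \<or> rQ j \<longrightarrow> a' = \<beta> i j \<and> b' = \<gamma> i j) \<and> (\<not> rP i \<and> \<not> rQ j \<longrightarrow> a' + b' = \<alpha> i j)"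
      using contract_cases[OF that(2)[unfolded d] d0] e by blast
    have "a = a'" using c1 c2 e(2) by (cases "rP i \<or> rQ j") linarith+
    then show ?thesis using c d e by simp
  qed
  obtain Acc where H: "Acc \<subseteq> ?X \<and> (\<forall>c\<in>Acc. \<forall>d\<in>Acc. pa c = pa d \<longrightarrow> c = d) \<and> (\<forall>c\<in>Acc. \<forall>d\<in>Acc. qa c = qa d \<longrightarrow> c = d)
     \<and> (\<forall>c\<in>?X. (\<exists>a\<in>Acc. pa a = pa c \<and> kp c \<le> kp a) \<or> (\<exists>a\<in>Acc. qa a = qa c \<and> kq c \<le> kq a))"
  proof -
    have "\<exists>Acc \<subseteq> ?X. (\<forall>c\<in>Acc. \<forall>d\<in>Acc. pa c = pa d \<longrightarrow> c = d) \<and> (\<forall>c\<in>Acc. \<forall>d\<in>Acc. qa c = qa d \<longrightarrow> c = d)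
     \<and> (\<forall>c\<in>?X. (\<exists>a\<in>Acc. pa a = pa c \<and> kp c \<le> kp a) \<or> (\<exists>a\<in>Acc. qa a = qa c \<and> kq c \<le> kq a))"
      apply (rule hm)
        apply (rule contracts_finite[OF d0])
       apply (rule injp; assumption)
      apply (rule injq; assumption)
      done
    then show ?thesis by (elim exE) (rule that)
  qed
  have AX: "Acc \<subseteq> ?X" using H by (elim conjE)
  have up: "\<And>c d. c \<in> Acc \<Longrightarrow> d \<in> Acc \<Longrightarrow> pa c = pa d \<Longrightarrow> c = d" using H by (elim conjE) blast
  have uq: "\<And>c d. c \<in> Acc \<Longrightarrow> d \<in> Acc \<Longrightarrow> qa c = qa d \<Longrightarrow> c = d" using H by (elim conjE) blast
  have dich: "\<And>c. c \<in> ?X \<Longrightarrow> (\<exists>a\<in>Acc. pa a = pa c \<and> kp c \<le> kp a) \<or> (\<exists>a\<in>Acc. qa a = qa c \<and> kq c \<le> kq a)"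
    using H by (elim conjE) blast
  have finA: "finite Acc" using AX contracts_finite[OF d0] finite_subset by auto
  have ipa: "inj_on pa Acc" and iqa: "inj_on qa Acc" using up uq unfolding inj_on_def by auto
  have cpa: "card (pa ` Acc) = card Acc" and cqa: "card (qa ` Acc) = card Acc"
    using card_image[OF ipa] card_image[OF iqa] by auto
  have exc: "\<exists>c\<in>?X. pa c = i \<and> qa c = j" for i j
  proof (cases "rP i \<or> rQ j")
    case True
    then show ?thesis by (intro bexI[of _ "(i, j, \<beta> i j, \<gamma> i j)"]) (auto simp: contracts_def pa_def qa_def)
  next
    case False
    have "0 \<le> \<alpha> i j" using nonneg[of i j] by (simp add: alpha_def)
    then have "(i, j, real 0 * \<delta>, \<alpha> i j - real 0 * \<delta>) \<in> ?X" using False unfolding contracts_def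
      by (intro UnI2 CollectI exI[of _ i] exI[of _ j] exI[of _ "0::nat"]) simp
    then show ?thesis by (intro bexI[of _ "(i, j, real 0 * \<delta>, \<alpha> i j - real 0 * \<delta>)"]) (auto simp: pa_def qa_def)
  qed
  have covP: "pa ` Acc = UNIV"
  proof (rule ccontr)
    assume "pa ` Acc \<noteq> UNIV"
    then obtain i0 where i0: "i0 \<notin> pa ` Acc" by auto
    have "card (pa ` Acc) < CARD('n)" using i0 by (intro psubset_card_mono) auto
    then have "card (qa ` Acc) < CARD('n)" using cpa cqa by simp
    then have "qa ` Acc \<noteq> UNIV" by auto
    then obtain j0 where j0: "j0 \<notin> qa ` Acc" by auto
    obtain c where c: "c \<in> ?X" "pa c = i0" "qa c = j0" using exc by blast
    show False using dich[OF c(1)] c i0 j0 by (metis image_eqI)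
  qed
  have "card Acc = CARD('n)" using covP cpa by simp
  then have covQ: "qa ` Acc = UNIV" using cqa by (intro card_subset_eq) auto
  have "\<forall>i. \<exists>c. c \<in> Acc \<and> pa c = i"
  proof
    fix i have "i \<in> pa ` Acc" using covP by simp
    then show "\<exists>c. c \<in> Acc \<and> pa c = i" by blast
  qed
  from choice[OF this] obtain f where f: "\<And>i. f i \<in> Acc \<and> pa (f i) = i" by blast
  have "\<forall>j. \<exists>c. c \<in> Acc \<and> qa c = j"
  proof
    fix j have "j \<in> qa ` Acc" using covQ by simp
    then show "\<exists>c. c \<in> Acc \<and> qa c = j" by blast
  qed
  from choice[OF this] obtain g where g: "\<And>j. g j \<in> Acc \<and> qa (g j) = j" by blast
  define \<sigma> where "\<sigma> i = qa (f i)" for i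
  define u where "u i = fst (snd (snd (f i)))" for i
  define v where "v j = snd (snd (snd (g j)))" for j
  have gs: "g (\<sigma> i) = f i" for i
  proof (rule uq)
    show "g (\<sigma> i) \<in> Acc" "f i \<in> Acc" using f g by blast+
    show "qa (g (\<sigma> i)) = qa (f i)" using g[of "\<sigma> i"] unfolding \<sigma>_def by simp
  qed
  have fi: "f i = (i, \<sigma> i, u i, v (\<sigma> i))" for i
  proof -
    have "fst (f i) = i" using f[of i] unfolding pa_def by simp
    moreover have "fst (snd (f i)) = \<sigma> i" unfolding \<sigma>_def qa_def by simp
    moreover have "fst (snd (snd (f i))) = u i" unfolding u_def by simp
    moreover have "snd (snd (snd (f i))) = v (\<sigma> i)" unfolding v_def gs by simp
    ultimately show ?thesis by (metis prod.collapse)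
  qed
  have fX: "(i, \<sigma> i, u i, v (\<sigma> i)) \<in> ?X" for i using f[of i] fi[of i] AX by auto
  note cc = contract_cases[OF fX d0]
  have "inj \<sigma>" unfolding inj_def
  proof (intro allI impI)
    fix i i' assume h: "\<sigma> i = \<sigma> i'"
    have "f i = g (\<sigma> i)" using gs[of i] by simp
    also have "\<dots> = g (\<sigma> i')" using h by simp
    also have "\<dots> = f i'" using gs[of i'] by simp
    finally have e: "f i = f i'" .
    have "i = pa (f i)" using f[of i] by simp
    also have "\<dots> = pa (f i')" using e by simp
    also have "\<dots> = i'" using f[of i'] by simp
    finally show "i = i'" .
  qed
  then have b\<sigma>: "bij \<sigma>" by (rule inj_bij_finite)
  have u0: "0 \<le> u i" for i using cc[of i] nonneg[of i "\<sigma> i"] by (cases "rP i \<or> rQ (\<sigma> i)") auto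
  have v0: "0 \<le> v j" for j
  proof -
    define i where "i = inv \<sigma> j"
    have "\<sigma> i = j" unfolding i_def using b\<sigma> by (simp add: bij_def surj_f_inv_f)
    then show ?thesis using cc[of i] nonneg[of i "\<sigma> i"] by (cases "rP i \<or> rQ (\<sigma> i)") auto
  qed
  have pe: "u i + v (\<sigma> i) = \<alpha> i (\<sigma> i)" for i using cc[of i] by (cases "rP i \<or> rQ (\<sigma> i)") (auto simp: alpha_def)
  have sm: "(\<Sum>i\<in>UNIV. u i) + (\<Sum>j\<in>UNIV. v j) = (\<Sum>i\<in>UNIV. \<alpha> i (\<sigma> i))"
    using sum_reindex_bij[OF b\<sigma>, of v] pe by (simp add: sum.distrib[symmetric])
  have feas: "feasible \<beta> \<gamma> rP rQ (u, v, \<sigma>)"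
    unfolding feasible_def using b\<sigma> u0 v0 sm cc by auto
  have pside: "\<And>a. a \<in> Acc \<Longrightarrow> pa a = i \<Longrightarrow> a = f i" for i using up[of _ "f i"] f[of i] by simp
  have qside: "\<And>a. a \<in> Acc \<Longrightarrow> qa a = j \<Longrightarrow> a = g j" for j using uq[of _ "g j"] g[of j] by simp
  have kpf: "kp (f i) = Key (u i) (to_nat (\<sigma> i))" for i unfolding kp_def using fi[of i] by simp
  have kqg: "kq (g j) = Key (v j) (to_nat (pa (g j)))" for j unfolding kq_def v_def pa_def by simp
  have rig: "\<beta> i j \<le> u i \<or> \<gamma> i j \<le> v j" if "rP i \<or> rQ j" for i j
  proof -
    have cX: "(i, j, \<beta> i j, \<gamma> i j) \<in> ?X" using that unfolding contracts_def by blast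
    show ?thesis
    proof (cases "\<exists>a\<in>Acc. pa a = pa (i, j, \<beta> i j, \<gamma> i j) \<and> kp (i, j, \<beta> i j, \<gamma> i j) \<le> kp a")
      case True
      then obtain a where a: "a \<in> Acc" "pa a = i" "kp (i, j, \<beta> i j, \<gamma> i j) \<le> kp a" unfolding pa_def by auto
      then have "a = f i" using pside by auto
      then have "Key (\<beta> i j) (to_nat j) \<le> Key (u i) (to_nat (\<sigma> i))" using a(3) kpf[of i] unfolding kp_def by simp
      then show ?thesis by (blast dest: key_le_fst)
    next
      case False
      then obtain a where a: "a \<in> Acc" "qa a = j" "kq (i, j, \<beta> i j, \<gamma> i j) \<le> kq a" using dich[OF cX] unfolding qa_def by auto
      then have "a = g j" using qside by auto
      then have "Key (\<gamma> i j) (to_nat i) \<le> Key (v j) (to_nat (pa (g j)))" using a(3) kqg[of j] unfolding kq_def by simp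
      then show ?thesis by (blast dest: key_le_fst)
    qed
  qed
  have flex: "\<alpha> i j - \<delta> \<le> u i + v j" if "\<not> rP i" "\<not> rQ j" for i j
  proof (rule ccontr)
    assume "\<not> \<alpha> i j - \<delta> \<le> u i + v j"
    then have lt: "u i + v j < \<alpha> i j - \<delta>" by simp
    define k where "k = nat \<lfloor>u i / \<delta>\<rfloor> + 1"
    have fl0: "0 \<le> \<lfloor>u i / \<delta>\<rfloor>" using u0[of i] d0 by simp
    have rk: "real k = of_int \<lfloor>u i / \<delta>\<rfloor> + 1" unfolding k_def using fl0 by simp
    have "u i / \<delta> < real k" using rk by linarith
    then have s1: "u i < real k * \<delta>" using d0 by (simp add: field_simps)
    have "real k \<le> u i / \<delta> + 1" using rk by linarith
    then have s2: "real k * \<delta> \<le> u i + \<delta>" using d0 by (simp add: field_simps)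
    let ?s = "real k * \<delta>"
    have "?s \<le> \<alpha> i j" using s2 lt v0[of j] by linarith
    then have cX: "(i, j, ?s, \<alpha> i j - ?s) \<in> ?X" using that unfolding contracts_def
      by (intro UnI2 CollectI exI[of _ i] exI[of _ j] exI[of _ k]) simp
    show False
    proof (cases "\<exists>a\<in>Acc. pa a = pa (i, j, ?s, \<alpha> i j - ?s) \<and> kp (i, j, ?s, \<alpha> i j - ?s) \<le> kp a")
      case True
      then obtain a where a: "a \<in> Acc" "pa a = i" "kp (i, j, ?s, \<alpha> i j - ?s) \<le> kp a" unfolding pa_def by auto
      then have "a = f i" using pside by auto
      then have "Key ?s (to_nat j) \<le> Key (u i) (to_nat (\<sigma> i))" using a(3) kpf[of i] unfolding kp_def by simp
      then have "?s \<le> u i" by (blast dest: key_le_fst)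
      then show False using s1 by simp
    next
      case False
      then obtain a where a: "a \<in> Acc" "qa a = j" "kq (i, j, ?s, \<alpha> i j - ?s) \<le> kq a" using dich[OF cX] unfolding qa_def by auto
      then have "a = g j" using qside by auto
      then have "Key (\<alpha> i j - ?s) (to_nat i) \<le> Key (v j) (to_nat (pa (g j)))" using a(3) kqg[of j] unfolding kq_def by simp
      then have "\<alpha> i j - ?s \<le> v j" by (blast dest: key_le_fst)
      then show False using s2 lt by simp
    qed
  qed
  show ?thesis using feas rig flex by blast
qed

abbreviation "rig x \<equiv> (\<forall>i j. rP i \<or> rQ j \<longrightarrow> \<beta> i j \<le> fst x i \<or> \<gamma> i j \<le> fst (snd x) j)"

lemma closed_FR: "closed {p. feasible \<beta> \<gamma> rP rQ (unvec p \<sigma>) \<and> rig (unvec p \<sigma>)}"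
proof -
  have e: "{p. feasible \<beta> \<gamma> rP rQ (unvec p \<sigma>) \<and> rig (unvec p \<sigma>)} = {p. bij \<sigma> \<and>
        (\<forall>i. 0 \<le> fst p $ i) \<and> (\<forall>j. 0 \<le> snd p $ j) \<and>
        (\<forall>i. rP i \<longrightarrow> fst p $ i = \<beta> i (\<sigma> i) \<and> (\<not> rQ (\<sigma> i) \<longrightarrow> \<gamma> i (\<sigma> i) \<le> snd p $ (\<sigma> i))) \<and>
        (\<forall>i. rQ (\<sigma> i) \<longrightarrow> snd p $ (\<sigma> i) = \<gamma> i (\<sigma> i) \<and> (\<not> rP i \<longrightarrow> \<beta> i (\<sigma> i) \<le> fst p $ i)) \<and>
        (\<Sum>i\<in>UNIV. fst p $ i) + (\<Sum>j\<in>UNIV. snd p $ j) = (\<Sum>i\<in>UNIV. \<alpha> i (\<sigma> i)) \<and>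
        (\<forall>i j. rP i \<or> rQ j \<longrightarrow> \<beta> i j \<le> fst p $ i \<or> \<gamma> i j \<le> snd p $ j)}"
    unfolding unvec_def feasible_def by simp
  show ?thesis unfolding e
    by (intro closed_Collect_conj closed_Collect_all closed_Collect_imp closed_Collect_disj
        closed_Collect_le closed_Collect_eq closed_Collect_const open_Collect_const
        continuous_intros)
qed

lemma feas_bound:
  assumes "feasible \<beta> \<gamma> rP rQ (u, v, \<sigma>)"
  shows "u i \<le> (\<Sum>i\<in>UNIV. \<Sum>j\<in>UNIV. \<alpha> i j)" "v j \<le> (\<Sum>i\<in>UNIV. \<Sum>j\<in>UNIV. \<alpha> i j)" "0 \<le> u i" "0 \<le> v j"
proof -
  have F: "(\<forall>i. 0 \<le> u i) \<and> (\<forall>j. 0 \<le> v j) \<and> (\<Sum>i\<in>UNIV. u i) + (\<Sum>j\<in>UNIV. v j) = (\<Sum>i\<in>UNIV. \<alpha> i (\<sigma> i))"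
    using assms unfolding feasible_def by simp
  then have s2: "\<And>i. 0 \<le> u i" and s3: "\<And>j. 0 \<le> v j" and sm: "(\<Sum>i\<in>UNIV. u i) + (\<Sum>j\<in>UNIV. v j) = (\<Sum>i\<in>UNIV. \<alpha> i (\<sigma> i))"
    by auto
  have a0: "0 \<le> \<alpha> i j" for i j using nonneg[of i j] by (simp add: alpha_def)
  have "(\<Sum>i\<in>UNIV. \<alpha> i (\<sigma> i)) \<le> (\<Sum>i\<in>UNIV. \<Sum>j\<in>UNIV. \<alpha> i j)"
    by (intro sum_mono member_le_sum) (auto simp: a0)
  moreover have "u i \<le> (\<Sum>i\<in>UNIV. u i)" by (rule member_le_sum) (auto simp: s2)
  moreover have "v j \<le> (\<Sum>j\<in>UNIV. v j)" by (rule member_le_sum) (auto simp: s3)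
  moreover have "0 \<le> (\<Sum>i\<in>UNIV. u i)" "0 \<le> (\<Sum>j\<in>UNIV. v j)" by (auto intro: sum_nonneg simp: s2 s3)
  ultimately show "u i \<le> (\<Sum>i\<in>UNIV. \<Sum>j\<in>UNIV. \<alpha> i j)" "v j \<le> (\<Sum>i\<in>UNIV. \<Sum>j\<in>UNIV. \<alpha> i j)"
    using sm by linarith+
  show "0 \<le> u i" "0 \<le> v j" using s2 s3 by auto
qed

lemma compact_FR: "compact (pt ` {x. feasible \<beta> \<gamma> rP rQ x \<and> rig x})"
proof -
  let ?T = "{x. feasible \<beta> \<gamma> rP rQ x \<and> rig x}"
  have eq: "pt ` ?T = (\<Union>\<sigma>\<in>UNIV. {p. feasible \<beta> \<gamma> rP rQ (unvec p \<sigma>) \<and> rig (unvec p \<sigma>)})"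
  proof (intro equalityI subsetI)
    fix p assume "p \<in> pt ` ?T"
    then obtain u v \<sigma> where h: "feasible \<beta> \<gamma> rP rQ (u, v, \<sigma>) \<and> rig (u, v, \<sigma>)" "p = pt (u, v, \<sigma>)" by auto
    then have e: "unvec p \<sigma> = (u, v, \<sigma>)" using unvec_pt by simp
    have "p \<in> {p. feasible \<beta> \<gamma> rP rQ (unvec p \<sigma>) \<and> rig (unvec p \<sigma>)}"
      unfolding mem_Collect_eq e by (rule h(1))
    then show "p \<in> (\<Union>\<sigma>\<in>UNIV. {p. feasible \<beta> \<gamma> rP rQ (unvec p \<sigma>) \<and> rig (unvec p \<sigma>)})"
      by blast
  next
    fix p assume "p \<in> (\<Union>\<sigma>\<in>UNIV. {p. feasible \<beta> \<gamma> rP rQ (unvec p \<sigma>) \<and> rig (unvec p \<sigma>)})"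
    then obtain \<sigma> where "feasible \<beta> \<gamma> rP rQ (unvec p \<sigma>) \<and> rig (unvec p \<sigma>)" by blast
    then have m: "unvec p \<sigma> \<in> ?T" unfolding mem_Collect_eq .
    have "p = pt (unvec p \<sigma>)" by (simp add: pt_unvec)
    from this m show "p \<in> pt ` ?T" by (rule image_eqI)
  qed
  have "closed (pt ` ?T)" unfolding eq
    apply (rule closed_UN)
     apply simp
    apply (rule ballI)
    apply (rule closed_FR)
    done
  moreover have "bounded (pt ` ?T)"
  proof -
    define M where "M = (\<Sum>i\<in>UNIV. \<Sum>j\<in>UNIV. \<alpha> i j)"
    have "norm p \<le> real CARD('n) * M + real CARD('n) * M" if "p \<in> pt ` ?T" for p
    proof -
      obtain u v \<sigma> where x: "feasible \<beta> \<gamma> rP rQ (u, v, \<sigma>)" "p = pt (u, v, \<sigma>)" using \<open>p \<in> pt ` ?T\<close> by auto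
      note b = feas_bound[OF x(1)]
      have "norm (vec_lambda u) \<le> real CARD('n) * M"
      proof -
        have "norm (vec_lambda u) \<le> (\<Sum>i\<in>UNIV. \<bar>vec_lambda u $ i\<bar>)" by (rule norm_le_l1_cart)
        also have "\<dots> \<le> (\<Sum>i\<in>(UNIV::'n set). M)" by (rule sum_mono) (use b(1,3) in \<open>auto simp: M_def\<close>)
        finally show ?thesis by simp
      qed
      moreover have "norm (vec_lambda v) \<le> real CARD('n) * M"
      proof -
        have "norm (vec_lambda v) \<le> (\<Sum>i\<in>UNIV. \<bar>vec_lambda v $ i\<bar>)" by (rule norm_le_l1_cart)
        also have "\<dots> \<le> (\<Sum>i\<in>(UNIV::'n set). M)" by (rule sum_mono) (use b(2,4) in \<open>auto simp: M_def\<close>)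
        finally show ?thesis by simp
      qed
      ultimately show ?thesis using x(2) norm_Pair_le[of "vec_lambda u" "vec_lambda v"] unfolding pt_def by (simp add: algebra_simps)
    qed
    then show ?thesis unfolding bounded_iff by blast
  qed
  ultimately show ?thesis using compact_eq_bounded_closed by blast
qed

definition Flex :: "('n \<times> 'n) set" where "Flex = {ij. \<not> rP (fst ij) \<and> \<not> rQ (snd ij)}"

definition viol :: "(real^'n) \<times> (real^'n) \<Rightarrow> real" where
  "viol p = (\<Sum>ij\<in>Flex. max 0 (\<alpha> (fst ij) (snd ij) - fst p $ fst ij - snd p $ snd ij))"

lemma cont_viol: "continuous_on S viol"
  unfolding viol_def by (intro continuous_intros)

lemma exists_stable: "\<exists>x. stab x"
proof -
  let ?T = "{x. feasible \<beta> \<gamma> rP rQ x \<and> rig x}"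
  obtain u1 v1 s1 where "feasible \<beta> \<gamma> rP rQ (u1, v1, s1) \<and> rig (u1, v1, s1)"
    using approx[of 1] by auto
  then have "pt ` ?T \<noteq> {}" by blast
  from continuous_attains_inf[OF compact_FR this cont_viol]
  obtain x0 where x0: "feasible \<beta> \<gamma> rP rQ x0" "rig x0" and x0min: "\<And>t. feasible \<beta> \<gamma> rP rQ t \<Longrightarrow> rig t \<Longrightarrow> viol (pt x0) \<le> viol (pt t)"
    by auto
  obtain u v \<sigma> where x0d: "x0 = (u, v, \<sigma>)" by (cases x0)
  let ?C = "real (card Flex)"
  have vpt: "viol (pt (u', v', \<sigma>')) = (\<Sum>ij\<in>Flex. max 0 (\<alpha> (fst ij) (snd ij) - u' (fst ij) - v' (snd ij)))" for u' v' \<sigma>'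
    unfolding viol_def pt_def by simp
  have small: "viol (pt x0) \<le> ?C * \<delta>" if d: "\<delta> > 0" for \<delta>
  proof -
    obtain u' v' \<sigma>' where a: "feasible \<beta> \<gamma> rP rQ (u', v', \<sigma>')" "rig (u', v', \<sigma>')"
      "\<forall>i j. \<not> rP i \<and> \<not> rQ j \<longrightarrow> \<alpha> i j - \<delta> \<le> u' i + v' j"
      using approx[OF d] by auto
    have "viol (pt x0) \<le> viol (pt (u', v', \<sigma>'))" using x0min a(1,2) by auto
    also have "\<dots> \<le> (\<Sum>ij\<in>Flex. \<delta>)" unfolding vpt
    proof (rule sum_mono)
      fix ij assume "ij \<in> Flex"
      then have "\<alpha> (fst ij) (snd ij) - \<delta> \<le> u' (fst ij) + v' (snd ij)" using a(3) unfolding Flex_def by auto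
      then show "max 0 (\<alpha> (fst ij) (snd ij) - u' (fst ij) - v' (snd ij)) \<le> \<delta>" using d by simp
    qed
    also have "\<dots> = ?C * \<delta>" by simp
    finally show ?thesis .
  qed
  have nn: "0 \<le> max 0 (\<alpha> (fst ij) (snd ij) - u (fst ij) - v (snd ij))" for ij by simp
  have v0: "viol (pt x0) \<le> 0"
  proof (rule ccontr)
    assume "\<not> viol (pt x0) \<le> 0"
    then have pos: "viol (pt x0) > 0" by simp
    define \<delta> where "\<delta> = viol (pt x0) / (2 * (?C + 1))"
    have "\<delta> > 0" unfolding \<delta>_def using pos by (simp add: add_pos_nonneg)
    from small[OF this] have "viol (pt x0) \<le> ?C * \<delta>" .
    also have "?C * \<delta> < viol (pt x0)"
    proof -
      have "?C * \<delta> = viol (pt x0) * (?C / (2 * (?C + 1)))" unfolding \<delta>_def by (simp add: field_simps)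
      also have "\<dots> < viol (pt x0) * 1"
        using pos by (intro mult_strict_left_mono) (auto simp: field_simps)
      finally show ?thesis by simp
    qed
    finally show False by simp
  qed
  have flex: "\<alpha> i j \<le> u i + v j" if "\<not> rP i" "\<not> rQ j" for i j
  proof -
    have ij: "(i, j) \<in> Flex" using that unfolding Flex_def by simp
    have "max 0 (\<alpha> i j - u i - v j) \<le> viol (pt x0)"
      unfolding x0d vpt using member_le_sum[of "(i, j)" Flex "\<lambda>ij. max 0 (\<alpha> (fst ij) (snd ij) - u (fst ij) - v (snd ij))"] ij nn
      by (simp add: Flex_def)
    then show ?thesis using v0 by simp
  qed
  have "stab x0" unfolding x0d rifle_stable_def using x0 flex unfolding x0d by auto
  then show ?thesis by blast
qed

end

theorem theorem3:
  fixes \<beta> \<gamma> :: "'n::finite \<Rightarrow> 'n \<Rightarrow> real" and rP rQ :: "'n \<Rightarrow> bool"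
  assumes "\<forall>i j. 0 \<le> \<beta> i j \<and> 0 \<le> \<gamma> i j"
    and "non_degenerate \<beta> \<gamma> rP rQ"
  shows "(\<forall>x y. rifle_stable \<beta> \<gamma> rP rQ x \<and> rifle_stable \<beta> \<gamma> rP rQ y \<and> geP x y \<and> geP y x \<longrightarrow> x = y)
       \<and> (\<forall>A \<subseteq> {x. rifle_stable \<beta> \<gamma> rP rQ x}.
            (\<exists>s. is_lubP {x. rifle_stable \<beta> \<gamma> rP rQ x} A s) \<and> (\<exists>s. is_glbP {x. rifle_stable \<beta> \<gamma> rP rQ x} A s))
       \<and> (\<exists>!x. rifle_stable \<beta> \<gamma> rP rQ x \<and> (\<forall>y. rifle_stable \<beta> \<gamma> rP rQ y \<longrightarrow> geP x y))
       \<and> (\<exists>!x. rifle_stable \<beta> \<gamma> rP rQ x \<and> (\<forall>y. rifle_stable \<beta> \<gamma> rP rQ y \<longrightarrow> geP y x))"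
proof -
  interpret rifle_nd \<beta> \<gamma> rP rQ
    using assms by unfold_locales auto
  show ?thesis using main_lattice[OF exists_stable] .
qed

end
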